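(* Let $n\ge2$ and $x=(s_1,\dots,s_{n-1},p)\in\mathbb C^n$. The following are equivalent ("for all $j$" means for all $j=1,\dots,[n/2]$): (1) $x\in\mathbb G_n$; (2) $K(x)$ holds and $\binom{n}{j}-s_jz-s_{n-j}w+\binom{n}{j}pzw\ne0$ for all $z,w\in\overline{\mathbb D}$ and all $j$; (3) $K(x)$ holds and for all $j$: $\|\Phi_j(\cdot,x)\|_{H^\infty}<1$, and if $s_js_{n-j}=\binom{n}{j}^2p$ then in addition $|s_{n-j}|<\binom{n}{j}$; (3') $K(x)$ holds and for all $j$: $\|\Phi_{n-j}(\cdot,x)\|_{H^\infty}<1$, and if $s_js_{n-j}=\binom{n}{j}^2p$ then in addition $|s_j|<\binom{n}{j}$; (4) $K(x)$ holds and $\binom{n}{j}|s_j-\bar s_{n-j}p|+|s_js_{n-j}-\binom{n}{j}^2p|<\binom{n}{j}^2-|s_{n-j}|^2$ for all $j$; (4') $K(x)$ holds and $\binom{n}{j}|s_{n-j}-\bar s_{j}p|+|s_js_{n-j}-\binom{n}{j}^2p|<\binom{n}{j}^2-|s_{j}|^2$ for all $j$; (5) $K(x)$ holds and for all $j$: $|s_j|^2-|s_{n-j}|^2+\binom{n}{j}^2|p|^2+2\binom{n}{j}|s_{n-j}-\bar s_jp|<\binom{n}{j}^2$ and $|s_{n-j}|<\binom{n}{j}$; (5') $K(x)$ holds and for all $j$: $|s_{n-j}|^2-|s_{j}|^2+\binom{n}{j}^2|p|^2+2\binom{n}{j}|s_{j}-\bar s_{n-j}p|<\binom{n}{j}^2$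 and $|s_{j}|<\binom{n}{j}$; (6) $K(x)$ holds, $|p|<1$ and $|s_j|^2+|s_{n-j}|^2-\binom{n}{j}^2|p|^2+2|s_js_{n-j}-\binom{n}{j}^2p|<\binom{n}{j}^2$ for all $j$; (7) $K(x)$ holds and $|s_{n-j}-\bar s_jp|+|s_j-\bar s_{n-j}p|<\binom{n}{j}(1-|p|^2)$ for all $j$; (8) $K(x)$ holds and there are $2\times2$ matrices $B_1,\dots,B_{[n/2]}$ with $\|B_j\|<1$, $s_j=\binom{n}{j}[B_j]_{11}$, $s_{n-j}=\binom{n}{j}[B_j]_{22}$ for all $j$, and $\det B_1=\dots=\det B_{[n/2]}=p$; (9) as (8) but with the $B_j$ symmetric.
   Context: $\mathbb D$ is the open unit disc; $\|\cdot\|$ operator norm. For $m\ge1$, $\mathbb G_m=\pi_m(\mathbb D^m)$ where $\pi_m(z)=(s_1(z),\dots,s_{m-1}(z),z_1\cdots z_m)$ with $s_i$ the elementary symmetric polynomials ($\mathbb G_1=\mathbb D$). For $x=(s_1,\dots,s_{n-1},p)$, $K(x)$ is the statement: $|p|\neq1$ and $\left(\frac{s_1-\bar s_{n-1}p}{1-|p|^2},\frac{s_2-\bar s_{n-2}p}{1-|p|^2},\dots,\frac{s_{n-1}-\bar s_1p}{1-|p|^2}\right)\in\mathbb G_{n-1}$. For $z\in\mathbb C$, $y=(y_1,\dots,y_{n-1},q)\in\mathbb C^n$, $j\in\{1,\dots,n-1\}$: $\Phi_j(z,y)=\dfrac{\binom{n}{j}qz-y_j}{y_{n-j}z-\binom{n}{j}}$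 if $y_{n-j}z\ne\binom{n}{j}$ and $y_jy_{n-j}\ne\binom{n}{j}^2q$, and $\Phi_j(z,y)=y_j/\binom{n}{j}$ if $y_jy_{n-j}=\binom{n}{j}^2q$; $\|\Phi_j(\cdot,y)\|_{H^\infty}=\sup_{z\in\mathbb D}|\Phi_j(z,y)|$ ($+\infty$ if undefined somewhere on $\mathbb D$ or unbounded). *)

theory Defs
  imports "HOL-Analysis.Analysis"
begin

definition esym :: "nat \<Rightarrow> (nat \<Rightarrow> complex) \<Rightarrow> nat \<Rightarrow> complex" where
  "esym m z k = (\<Sum>S\<in>{S. S \<subseteq> {..<m} \<and> card S = k}. \<Prod>i\<in>S. z i)"

text \<open>Membership of (s_1,...,s_{m-1},p) in the symmetrized polydisc G_m = pi_m(D^m).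
  Only the values s 1, ..., s (m-1) are relevant.\<close>
definition in_G :: "nat \<Rightarrow> (nat \<Rightarrow> complex) \<Rightarrow> complex \<Rightarrow> bool" where
  "in_G m s p \<longleftrightarrow> (\<exists>z. (\<forall>i<m. z i \<in> ball 0 1) \<and>
      (\<forall>k\<in>{1..m-1}. s k = esym m z k) \<and> p = (\<Prod>i<m. z i))"

definition condK :: "nat \<Rightarrow> (nat \<Rightarrow> complex) \<Rightarrow> complex \<Rightarrow> bool" where
  "condK n s p \<longleftrightarrow> cmod p \<noteq> 1 \<and>
     in_G (n-1) (\<lambda>k. (s k - cnj (s (n-k)) * p) / (1 - complex_of_real ((cmod p)\<^sup>2)))
                ((s (n-1) - cnj (s 1) * p) / (1 - complex_of_real ((cmod p)\<^sup>2)))"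

definition Phi_defined :: "nat \<Rightarrow> nat \<Rightarrow> complex \<Rightarrow> (nat \<Rightarrow> complex) \<Rightarrow> complex \<Rightarrow> bool" where
  "Phi_defined n j z y q \<longleftrightarrow>
     (y (n-j) * z \<noteq> of_nat (n choose j) \<and> y j * y (n-j) \<noteq> (of_nat (n choose j))\<^sup>2 * q)
     \<or> y j * y (n-j) = (of_nat (n choose j))\<^sup>2 * q"

definition Phi :: "nat \<Rightarrow> nat \<Rightarrow> complex \<Rightarrow> (nat \<Rightarrow> complex) \<Rightarrow> complex \<Rightarrow> complex" where
  "Phi n j z y q =
     (if y j * y (n-j) = (of_nat (n choose j))\<^sup>2 * q then y j / of_nat (n choose j)
      else (of_nat (n choose j) * q * z - y j) / (y (n-j) * z - of_nat (n choose j)))"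

definition Phi_Hinf :: "nat \<Rightarrow> nat \<Rightarrow> (nat \<Rightarrow> complex) \<Rightarrow> complex \<Rightarrow> ereal" where
  "Phi_Hinf n j y q =
     (if \<forall>z\<in>ball 0 1. Phi_defined n j z y q
      then (SUP z\<in>ball 0 1. ereal (cmod (Phi n j z y q))) else \<infinity>)"

definition mat_opnorm :: "complex^2^2 \<Rightarrow> real" where
  "mat_opnorm B = onorm (\<lambda>v::complex^2. B *v v)"

end

theory Submission
  imports Defs "HOL-Computational_Algebra.Fundamental_Theorem_Algebra"
begin



lemma cid1: "(cmod (a - cnj b * p))^2 = (cmod (a*b - p))^2 + (1 - (cmod b)^2) * ((cmod a)^2 - (cmod p)^2)"
  unfolding cmod_power2 by (simp add: algebra_simps power2_eq_square)

lemma cid3: "(cmod (1 - a*z))^2 - (cmod (b - p*z))^2 = (1 - (cmod b)^2) + ((cmod a)^2 - (cmod p)^2) * (cmod z)^2 - 2 * Re ((a - cnj b * p) * z)"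
  unfolding cmod_power2 by (simp add: algebra_simps power2_eq_square)

lemma tri1: "\<bar>cmod a - cmod b * cmod p\<bar> \<le> cmod (a - cnj b * p)"
proof -
  have "cmod (cnj b * p) = cmod b * cmod p" by (simp add: norm_mult)
  then show ?thesis using norm_triangle_ineq3[of a "cnj b * p"] by simp
qed

lemma tri2: "\<bar>cmod a * cmod b - cmod p\<bar> \<le> cmod (a * b - p)"
proof -
  have "cmod (a*b) = cmod a * cmod b" by (simp add: norm_mult)
  then show ?thesis using norm_triangle_ineq3[of "a*b" p] by simp
qed



lemma real_T_facts:
  fixes x y r B G m :: real
  assumes nn: "x\<ge>0" "y\<ge>0" "r\<ge>0" "B\<ge>0" "G\<ge>0" "m\<ge>0"
  and I1: "B^2 = m^2 + (1-y^2)*(x^2-r^2)" and I2: "G^2 = m^2 + (1-x^2)*(y^2-r^2)"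
  and t1: "\<bar>x - y*r\<bar> \<le> B" and t2: "\<bar>y - x*r\<bar> \<le> G" and t3: "\<bar>x*y - r\<bar> \<le> m"
  and T: "B + G < 1 - r^2"
  shows "r < 1" "x + y < 1 + r" "\<bar>x - y\<bar> < 1 - r" "1 - x^2 - y^2 + r^2 > 2*m"
        "(1-y^2) + (x^2-r^2) > 2*B" "(1-x^2)+(y^2-r^2) > 2*G"
proof -
  define u where "u = 1 - r^2"
  have u0: "u > 0" using T nn unfolding u_def by linarith
  show r1: "r < 1" using u0 nn unfolding u_def by (smt (verit) one_le_power)
  have "(x+y)*(1-r) \<le> B + G" using t1 t2 by (auto simp: algebra_simps abs_le_iff)
  also have "\<dots> < (1-r)*(1+r)" using T by (simp add: algebra_simps power2_eq_square)
  finally show xy: "x + y < 1 + r" using r1 by (simp add: mult.commute)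
  have "(x-y)*(1+r) \<le> B + G" using t1 t2 by (auto simp: algebra_simps abs_le_iff)
  also have "\<dots> < (1-r)*(1+r)" using T by (simp add: algebra_simps power2_eq_square)
  finally have a1: "x - y < 1 - r" using nn by (simp add: mult.commute)
  have "(y-x)*(1+r) \<le> B + G" using t1 t2 by (auto simp: algebra_simps abs_le_iff)
  also have "\<dots> < (1-r)*(1+r)" using T by (simp add: algebra_simps power2_eq_square)
  finally have a2: "y - x < 1 - r" using nn by (simp add: mult.commute)
  show xmy: "\<bar>x - y\<bar> < 1 - r" using a1 a2 by linarith
  define X where "X = 1 - x^2 - y^2 + r^2"
  have s1: "(x+y)^2 < (1+r)^2" using xy nn by (intro power_strict_mono) auto
  have s2: "(x-y)^2 < (1-r)^2" using xmy
    by (metis abs_ge_zero abs_power2 power_strict_mono power2_abs zero_less_numeral)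
  have X0: "X > 0" using s1 s2 unfolding X_def by (simp add: power2_eq_square algebra_simps)
  have BG: "B^2 - G^2 = u * (x^2 - y^2)" unfolding u_def using I1 I2 by (simp add: algebra_simps)
  have key: "u^2 * (X^2 - 4*m^2) = (u^2 - (B+G)^2) * (u^2 - (B-G)^2)"
    unfolding u_def X_def using I1 I2 by algebra
  have p1: "u^2 - (B+G)^2 > 0" using T nn unfolding u_def
    by (smt (verit) power_strict_mono zero_less_numeral)
  have p2: "u^2 - (B-G)^2 > 0"
  proof -
    have "\<bar>B - G\<bar> < u" using T nn unfolding u_def by linarith
    then have "\<bar>B - G\<bar>^2 < u^2" by (intro power_strict_mono) auto
    then show ?thesis by simp
  qed
  have "u^2 * (X^2 - 4*m^2) > 0" using key p1 p2 by simp
  then have "X^2 - 4*m^2 > 0" using u0 by (simp add: zero_less_mult_iff)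
  then have "(2*m)^2 < X^2" by (simp add: power_mult_distrib)
  then have "2*m < X" using X0 by (smt (verit) nn(6) power_mono)
  then show "1 - x^2 - y^2 + r^2 > 2*m" unfolding X_def .
  have "G < u - B" using T unfolding u_def by linarith
  then have "G^2 < (u-B)^2" using nn by (intro power_strict_mono) auto
  then have "u * (u + (x^2 - y^2) - 2*B) > 0" using BG by (simp add: power2_eq_square algebra_simps)
  then have "u + (x^2 - y^2) - 2*B > 0" using u0 by (simp add: zero_less_mult_iff)
  then show "(1-y^2) + (x^2-r^2) > 2*B" unfolding u_def by simp
  have "B < u - G" using T unfolding u_def by linarith
  then have "B^2 < (u-G)^2" using nn by (intro power_strict_mono) auto
  then have "u * (u - (x^2 - y^2) - 2*G) > 0" using BG by (simp add: power2_eq_square algebra_simps)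
  then have "u - (x^2 - y^2) - 2*G > 0" using u0 by (simp add: zero_less_mult_iff)
  then show "(1-x^2)+(y^2-r^2) > 2*G" unfolding u_def by simp
qed



lemma real_4_crit:
  fixes x y r B m :: real
  assumes nn: "B\<ge>0" "m\<ge>0"
  and I1: "B^2 = m^2 + (1-y^2)*(x^2-r^2)"
  shows "B + m < 1 - y^2 \<longleftrightarrow> (1 - y^2 > B \<and> (1-y^2) + (x^2-r^2) > 2*B)"
proof -
  define A where "A = 1 - y^2"
  define D where "D = x^2 - r^2"
  have I: "m^2 = B^2 - A*D" using I1 unfolding A_def D_def by simp
  have "B + m < A \<longleftrightarrow> (A > B \<and> A + D > 2*B)"
  proof
    assume h: "B + m < A"
    then have "m < A - B" by simp
    then have "m^2 < (A-B)^2" using nn by (intro power_strict_mono) auto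
    then have "A * (A + D - 2*B) > 0" using I by (simp add: power2_eq_square algebra_simps)
    moreover have "A > 0" using h nn by simp
    ultimately show "A > B \<and> A + D > 2*B" using h nn by (simp add: zero_less_mult_iff)
  next
    assume h: "A > B \<and> A + D > 2*B"
    then have "A * (A + D - 2*B) > 0" using nn by simp
    then have "m^2 < (A-B)^2" using I by (simp add: power2_eq_square algebra_simps)
    then have "m < A - B" using h power_less_imp_less_base[of m 2 "A-B"] by simp
    then show "B + m < A" by simp
  qed
  then show ?thesis unfolding A_def D_def .
qed

lemma real_5_T:
  fixes x y r B G m :: real
  assumes nn: "x\<ge>0" "y\<ge>0" "r\<ge>0" "B\<ge>0" "G\<ge>0" "m\<ge>0"
  and I1: "B^2 = m^2 + (1-y^2)*(x^2-r^2)" and I2: "G^2 = m^2 + (1-x^2)*(y^2-r^2)"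
  and t2: "\<bar>y - x*r\<bar> \<le> G"
  and h5: "x^2 - y^2 + r^2 + 2*G < 1" and hy: "y < 1"
  shows "B + G < 1 - r^2"
proof -
  define u where "u = 1 - r^2"
  have g1: "G \<ge> y - x*r" "G \<ge> x*r - y" using t2 by auto
  have "(1+y)^2 > (x+r)^2" using h5 g1(2) by (simp add: power2_eq_square algebra_simps)
  then have c1: "x + r < 1 + y" using nn power_less_imp_less_base[of "x+r" 2 "1+y"] by simp
  have "(1-y)^2 > (x-r)^2" using h5 g1(1) by (simp add: power2_eq_square algebra_simps)
  then have "\<bar>x-r\<bar> < \<bar>1-y\<bar>"
    by (metis power2_abs power_less_imp_less_base abs_ge_zero)
  then have c2: "\<bar>x - r\<bar> < 1 - y" using hy by simp
  have r1: "r < 1" using c1 c2 by linarith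
  have u0: "u > 0" using r1 nn unfolding u_def using abs_square_less_1[of r] by simp
  have Gu: "G < u"
  proof (rule ccontr)
    assume "\<not> G < u"
    then have "y^2 - x^2 > 1 - r^2" using h5 unfolding u_def by linarith
    moreover have "y^2 < 1" using hy nn abs_square_less_1[of y] by simp
    ultimately have "x^2 < r^2" by simp
    then have xr: "x < r" using nn power_less_imp_less_base[of x 2 r] by simp
    have "y - x < 1 - r" using c2 xr by linarith
    moreover have "y + x < 1 + r" using hy xr by linarith
    ultimately have "y^2 - x^2 < 1 - r^2"
    proof (cases "y \<ge> x")
      case True
      have "(y-x)*(y+x) \<le> (y-x)*(1+r)" using True \<open>y + x < 1 + r\<close> by (intro mult_left_mono) auto
      also have "\<dots> < (1-r)*(1+r)" using \<open>y - x < 1 - r\<close> nn by (intro mult_strict_right_mono) auto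
      finally show ?thesis by (simp add: power2_eq_square algebra_simps)
    next
      case False
      then have "y^2 \<le> x^2" using nn by (intro power_mono) auto
      moreover have "r^2 < 1" using r1 nn abs_square_less_1[of r] by simp
      ultimately show ?thesis by linarith
    qed
    then show False using \<open>y^2 - x^2 > 1 - r^2\<close> by simp
  qed
  have BG: "B^2 = G^2 + u * (x^2 - y^2)" unfolding u_def using I1 I2 by (simp add: algebra_simps)
  have "x^2 - y^2 < u - 2*G" using h5 unfolding u_def by simp
  then have "u * (x^2 - y^2) < u * (u - 2*G)" using u0 by (intro mult_strict_left_mono)
  then have "B^2 < (u - G)^2" using BG by (simp add: power2_eq_square algebra_simps)
  then have "B < u - G" using Gu power_less_imp_less_base[of B 2 "u-G"] by simp
  then show ?thesis unfolding u_def by simp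
qed

lemma real_6_half:
  fixes x y r m :: real
  assumes nn: "x\<ge>0" "y\<ge>0" "r\<ge>0" "m\<ge>0"
  and t3: "\<bar>x*y - r\<bar> \<le> m"
  and h6: "x^2 + y^2 - r^2 + 2*m < 1" and hr: "r < 1"
  shows "x^2 - y^2 \<le> 1 - r^2"
proof (rule ccontr)
  assume c: "\<not> ?thesis"
  have "(1-r)^2 > (x-y)^2" using h6 t3 by (simp add: power2_eq_square algebra_simps abs_le_iff)
  then have "\<bar>x-y\<bar> < \<bar>1-r\<bar>"
    by (metis abs_power2 power2_abs power_less_imp_less_base abs_ge_zero)
  then have c2: "x - y < 1 - r" using hr by simp
  have "x^2 + y^2 < 1 + r^2" using h6 nn by simp
  then have "y^2 < r^2" using c by simp
  then have yr: "y < r" using nn power_less_imp_less_base[of y 2 r] by simp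
  have "r^2 < 1" using hr nn abs_square_less_1[of r] by simp
  then have "y^2 \<le> x^2" using c by linarith
  then have xy: "y \<le> x" using nn by (meson power2_le_imp_le)
  have "x + y < 1 + r" using c2 yr by linarith
  have "(x-y)*(x+y) \<le> (x-y)*(1+r)" using xy \<open>x + y < 1 + r\<close> by (intro mult_left_mono) auto
  also have "\<dots> < (1-r)*(1+r)" using c2 nn by (intro mult_strict_right_mono) auto
  finally have "x^2 - y^2 < 1 - r^2" by (simp add: power2_eq_square algebra_simps)
  then show False using c by simp
qed

lemma real_6_T:
  fixes x y r B G m :: real
  assumes nn: "x\<ge>0" "y\<ge>0" "r\<ge>0" "B\<ge>0" "G\<ge>0" "m\<ge>0"
  and I1: "B^2 = m^2 + (1-y^2)*(x^2-r^2)" and I2: "G^2 = m^2 + (1-x^2)*(y^2-r^2)"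
  and t3: "\<bar>x*y - r\<bar> \<le> m"
  and h6: "x^2 + y^2 - r^2 + 2*m < 1" and hr: "r < 1"
  shows "B + G < 1 - r^2"
proof -
  define u where "u = 1 - r^2"
  define d where "d = x^2 - y^2"
  define X where "X = 1 - x^2 - y^2 + r^2"
  have u0: "u > 0" using hr nn unfolding u_def using abs_square_less_1[of r] by simp
  have X2m: "X > 2*m" using h6 unfolding X_def by simp
  have "4 * B^2 = 4*m^2 + (u+d)^2 - X^2" unfolding u_def d_def X_def using I1 by (simp add: algebra_simps power2_eq_square)
  also have "\<dots> < (u+d)^2" using X2m nn power_strict_mono[of "2*m" X 2] by (simp add: power_mult_distrib)
  finally have "(2*B)^2 < \<bar>u+d\<bar>^2" by (simp add: power_mult_distrib)
  then have b: "2*B < \<bar>u+d\<bar>" by (metis abs_ge_zero power_less_imp_less_base)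
  have "4 * G^2 = 4*m^2 + (u-d)^2 - X^2" unfolding u_def d_def X_def using I2 by (simp add: algebra_simps power2_eq_square)
  also have "\<dots> < (u-d)^2" using X2m nn power_strict_mono[of "2*m" X 2] by (simp add: power_mult_distrib)
  finally have "(2*G)^2 < \<bar>u-d\<bar>^2" by (simp add: power_mult_distrib)
  then have g: "2*G < \<bar>u-d\<bar>" by (metis abs_ge_zero power_less_imp_less_base)
  have d1: "d \<le> u" using real_6_half[OF nn(1,2,3,6) t3 h6 hr] unfolding d_def u_def .
  have d2: "-d \<le> u" using real_6_half[of y x r m] nn t3 h6 hr unfolding d_def u_def
    by (simp add: mult.commute add.commute)
  have "\<bar>u+d\<bar> = u + d" "\<bar>u-d\<bar> = u - d" using d1 d2 by auto
  then show ?thesis using b g unfolding u_def by simp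
qed



definition E2 :: "complex \<Rightarrow> complex \<Rightarrow> complex \<Rightarrow> bool" where
  "E2 a b p \<longleftrightarrow> (\<forall>z w. cmod z \<le> 1 \<longrightarrow> cmod w \<le> 1 \<longrightarrow> 1 - a*z - b*w + p*z*w \<noteq> 0)"
definition SS :: "complex \<Rightarrow> complex \<Rightarrow> complex \<Rightarrow> bool" where
  "SS a b p \<longleftrightarrow> (\<forall>w. cmod w \<le> 1 \<longrightarrow> cmod (a - p*w) < cmod (1 - b*w))"

lemma E2_sym_imp: "E2 a b p \<Longrightarrow> E2 b a p"
  unfolding E2_def
proof (intro allI impI)
  fix z w :: complex
  assume H: "\<forall>z w. cmod z \<le> 1 \<longrightarrow> cmod w \<le> 1 \<longrightarrow> 1 - a*z - b*w + p*z*w \<noteq> 0"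
    and z: "cmod z \<le> 1" and w: "cmod w \<le> 1"
  have "1 - a*w - b*z + p*w*z \<noteq> 0" using H z w by blast
  then show "1 - b*z - a*w + p*z*w \<noteq> 0" by (simp add: algebra_simps)
qed

lemma E2_sym: "E2 a b p \<longleftrightarrow> E2 b a p"
  using E2_sym_imp by blast

lemma E2_SS: "E2 a b p \<longleftrightarrow> SS a b p"
proof
  assume E: "E2 a b p"
  show "SS a b p" unfolding SS_def
  proof (intro allI impI)
    fix w :: complex assume w: "cmod w \<le> 1"
    show "cmod (a - p*w) < cmod (1 - b*w)"
    proof (rule ccontr)
      assume "\<not> ?thesis"
      then have le: "cmod (1 - b*w) \<le> cmod (a - p*w)" by simp
      show False
      proof (cases "a - p*w = 0")
        case True
        then have "1 - b*w = 0" using le by simp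
        have z0: "cmod (0::complex) \<le> 1" by simp
        have "1 - a*0 - b*w + p*0*w \<noteq> 0" using E[unfolded E2_def, rule_format, OF z0 w] .
        then show False using \<open>1 - b*w = 0\<close> by simp
      next
        case False
        define z where "z = (1 - b*w) / (a - p*w)"
        have "cmod z \<le> 1" unfolding z_def using le False by (simp add: norm_divide divide_le_eq_1)
        moreover have "1 - a*z - b*w + p*z*w = 0" unfolding z_def using False
          by (simp add: field_simps)
        ultimately show False using E w unfolding E2_def by blast
      qed
    qed
  qed
next
  assume S: "SS a b p"
  show "E2 a b p" unfolding E2_def
  proof (intro allI impI)
    fix z w :: complex assume z: "cmod z \<le> 1" and w: "cmod w \<le> 1"
    have "cmod (z * (a - p*w)) \<le> cmod (a - p*w)" using z by (simp add: norm_mult mult_left_le_one_le)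
    also have "\<dots> < cmod (1 - b*w)" using S w unfolding SS_def by blast
    finally have "z * (a - p*w) \<noteq> 1 - b*w" by auto
    then show "1 - a*z - b*w + p*z*w \<noteq> 0" by (auto simp: algebra_simps)
  qed
qed

lemma SS_crit:
  "SS b a p \<longleftrightarrow> (1 - (cmod b)^2 > cmod (a - cnj b * p) \<and>
      (1 - (cmod b)^2) + ((cmod a)^2 - (cmod p)^2) > 2 * cmod (a - cnj b * p))"
proof -
  define A where "A = 1 - (cmod b)^2"
  define D where "D = (cmod a)^2 - (cmod p)^2"
  define Bc where "Bc = a - cnj b * p"
  define B where "B = cmod Bc"
  have diff: "(cmod (1 - a*z))^2 - (cmod (b - p*z))^2 = A + D * (cmod z)^2 - 2 * Re (Bc * z)" for z
    unfolding A_def D_def Bc_def by (rule cid3)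
  have AD: "A * D \<le> B^2" unfolding A_def D_def B_def Bc_def using cid1[of a b p] by simp
  have "SS b a p \<longleftrightarrow> (A > B \<and> A + D > 2*B)"
  proof
    assume S: "SS b a p"
    have q: "A + D*r^2 - 2*B*r > 0" if r: "0 \<le> r" "r \<le> 1" for r
    proof -
      define z where "z = (if Bc = 0 then complex_of_real r else complex_of_real r * cnj Bc / complex_of_real B)"
      have zn: "cmod z = r" using r unfolding z_def B_def by (auto simp: norm_mult norm_divide)
      have zr: "Re (Bc * z) = B * r"
      proof (cases "Bc = 0")
        case True then show ?thesis unfolding z_def B_def by simp
      next
        case False
        have "Bc * z = complex_of_real r * (Bc * cnj Bc) / complex_of_real B" using False unfolding z_def by (simp add: field_simps)
        also have "Bc * cnj Bc = complex_of_real (B^2)" unfolding B_def by (simp add: complex_mult_cnj cmod_def)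
        finally have "Bc * z = complex_of_real (r * B^2 / B)" by simp
        then show ?thesis using False unfolding B_def by (simp add: power2_eq_square)
      qed
      have "cmod (b - p*z) < cmod (1 - a*z)" using S zn r unfolding SS_def by auto
      then have "(cmod (b - p*z))^2 < (cmod (1 - a*z))^2" by (intro power_strict_mono) auto
      then have "0 < A + D * (cmod z)^2 - 2 * Re (Bc * z)" using diff[of z] by simp
      then have "0 < A + D * r^2 - 2 * (B*r)" by (simp only: zn zr)
      then show ?thesis by (simp add: algebra_simps)
    qed
    have A0: "A > 0" using q[of 0] by simp
    have c2: "A + D > 2*B" using q[of 1] by simp
    have c1: "A > B"
    proof (rule ccontr)
      assume "\<not> A > B"
      then have AB: "A \<le> B" by simp
      then have B0: "B > 0" using A0 by simp
      define r where "r = A / B"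
      have r01: "0 \<le> r" "r \<le> 1" using AB A0 B0 unfolding r_def by auto
      have "(A + D*r^2 - 2*B*r) * B^2 = A * (D*A - B^2)"
        unfolding r_def using B0 by (simp add: field_simps power2_eq_square)
      also have "\<dots> \<le> 0" using A0 AD by (simp add: mult_nonneg_nonpos mult.commute)
      finally show False using q[OF r01] B0 by (smt (verit) mult_pos_pos zero_less_power)
    qed
    show "A > B \<and> A + D > 2*B" using c1 c2 by simp
  next
    assume h: "A > B \<and> A + D > 2*B"
    have B0: "B \<ge> 0" unfolding B_def by simp
    show "SS b a p" unfolding SS_def
    proof (intro allI impI)
      fix z :: complex assume z: "cmod z \<le> 1"
      define r where "r = cmod z"
      have r01: "0 \<le> r" "r \<le> 1" using z unfolding r_def by auto
      have "Re (Bc * z) \<le> B * r" unfolding B_def r_def by (metis complex_Re_le_cmod norm_mult)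
      then have "A + D * r^2 - 2*B*r \<le> (cmod (1 - a*z))^2 - (cmod (b - p*z))^2"
        using diff[of z] unfolding r_def by simp
      moreover have "A + D * r^2 - 2*B*r > 0"
      proof -
        have e: "A + D * r^2 - 2*B*r = (1-r)^2 * A + 2*r*(1-r)*(A - B) + r^2*(A + D - 2*B)"
          by (simp add: power2_eq_square algebra_simps)
        have t1: "(1-r)^2 * A \<ge> 0" using h B0 by simp
        have t2: "2*r*(1-r)*(A - B) \<ge> 0" using h r01 by simp
        have t3: "r^2*(A + D - 2*B) \<ge> 0" using h by simp
        show ?thesis
        proof (cases "r = 0")
          case True then show ?thesis using h B0 by simp
        next
          case False
          then have "r^2*(A + D - 2*B) > 0" using h r01 by simp
          then show ?thesis using e t1 t2 by linarith
        qed
      qed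
      ultimately have "(cmod (b - p*z))^2 < (cmod (1 - a*z))^2" by simp
      then show "cmod (b - p*z) < cmod (1 - a*z)" by (simp add: power_less_imp_less_base)
    qed
  qed
  then show ?thesis unfolding A_def D_def B_def Bc_def .
qed


definition Tt :: "complex \<Rightarrow> complex \<Rightarrow> complex \<Rightarrow> bool" where
  "Tt a b p \<longleftrightarrow> cmod (b - cnj a * p) + cmod (a - cnj b * p) < 1 - (cmod p)^2"
definition C4 :: "complex \<Rightarrow> complex \<Rightarrow> complex \<Rightarrow> bool" where
  "C4 a b p \<longleftrightarrow> cmod (a - cnj b * p) + cmod (a*b - p) < 1 - (cmod b)^2"
definition C5 :: "complex \<Rightarrow> complex \<Rightarrow> complex \<Rightarrow> bool" where
  "C5 a b p \<longleftrightarrow> (cmod a)^2 - (cmod b)^2 + (cmod p)^2 + 2 * cmod (b - cnj a * p) < 1 \<and> cmod b < 1"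
definition C6 :: "complex \<Rightarrow> complex \<Rightarrow> complex \<Rightarrow> bool" where
  "C6 a b p \<longleftrightarrow> (cmod a)^2 + (cmod b)^2 - (cmod p)^2 + 2 * cmod (a*b - p) < 1 \<and> cmod p < 1"

lemma Tt_sym: "Tt a b p \<longleftrightarrow> Tt b a p" unfolding Tt_def by linarith

lemma cid2: "(cmod (b - cnj a * p))^2 = (cmod (a*b - p))^2 + (1 - (cmod a)^2) * ((cmod b)^2 - (cmod p)^2)"
  using cid1[of b a p] by (simp add: mult.commute)

lemma tri3: "\<bar>cmod b - cmod a * cmod p\<bar> \<le> cmod (b - cnj a * p)"
  by (rule tri1)

lemma T_facts_c:
  assumes "Tt a b p"
  shows "cmod p < 1" "cmod a + cmod b < 1 + cmod p" "\<bar>cmod a - cmod b\<bar> < 1 - cmod p"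
    "1 - (cmod a)^2 - (cmod b)^2 + (cmod p)^2 > 2 * cmod (a*b - p)"
    "(1 - (cmod b)^2) + ((cmod a)^2 - (cmod p)^2) > 2 * cmod (a - cnj b * p)"
    "(1 - (cmod a)^2) + ((cmod b)^2 - (cmod p)^2) > 2 * cmod (b - cnj a * p)"
proof -
  have T: "cmod (a - cnj b * p) + cmod (b - cnj a * p) < 1 - (cmod p)^2" using assms unfolding Tt_def by linarith
  note r = real_T_facts[OF norm_ge_zero norm_ge_zero norm_ge_zero norm_ge_zero norm_ge_zero norm_ge_zero
      cid1[of a b p] cid2[where a=a and b=b and p=p] tri1[of a b p] tri3[where a=a and b=b and p=p] tri2[of a b p] T]
  show "cmod p < 1" "cmod a + cmod b < 1 + cmod p" "\<bar>cmod a - cmod b\<bar> < 1 - cmod p"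
    "1 - (cmod a)^2 - (cmod b)^2 + (cmod p)^2 > 2 * cmod (a*b - p)"
    "(1 - (cmod b)^2) + ((cmod a)^2 - (cmod p)^2) > 2 * cmod (a - cnj b * p)"
    "(1 - (cmod a)^2) + ((cmod b)^2 - (cmod p)^2) > 2 * cmod (b - cnj a * p)"
    using r by auto
qed

lemma crit_c:
  assumes "C4 a b p"
  shows "(1 - (cmod b)^2) + ((cmod a)^2 - (cmod p)^2) > 2 * cmod (a - cnj b * p)"
  using assms real_4_crit[OF norm_ge_zero norm_ge_zero cid1[of a b p]] unfolding C4_def by blast

lemma E2_C4: "E2 a b p \<longleftrightarrow> C4 a b p"
proof -
  have "E2 a b p \<longleftrightarrow> SS b a p" using E2_sym E2_SS by blast
  also have "\<dots> \<longleftrightarrow> C4 a b p" unfolding SS_crit C4_def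
    using real_4_crit[OF norm_ge_zero norm_ge_zero cid1[of a b p]] by blast
  finally show ?thesis .
qed

lemma E2_C4': "E2 a b p \<longleftrightarrow> C4 b a p"
  using E2_C4[of b a p] E2_sym by blast

lemma Tt_C4:
  assumes "Tt a b p" shows "C4 a b p"
  using T_facts_c[OF assms] unfolding C4_def by linarith

lemma Tt_E2: "Tt a b p \<longleftrightarrow> E2 a b p"
proof
  assume "Tt a b p" then show "E2 a b p" using Tt_C4 E2_C4 by blast
next
  assume "E2 a b p"
  then have h1: "C4 a b p" and h2: "C4 b a p" using E2_C4 E2_C4' by blast+
  show "Tt a b p" using crit_c[OF h1] crit_c[OF h2] unfolding Tt_def by linarith
qed

lemma Tt_C5: "Tt a b p \<longleftrightarrow> C5 a b p"
proof
  assume T: "Tt a b p"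
  show "C5 a b p" using T_facts_c[OF T] unfolding C5_def by (auto simp: abs_less_iff)
next
  assume h: "C5 a b p"
  have h5: "(cmod a)^2 - (cmod b)^2 + (cmod p)^2 + 2 * cmod (b - cnj a * p) < 1" and hb: "cmod b < 1"
    using h unfolding C5_def by auto
  have "cmod (a - cnj b * p) + cmod (b - cnj a * p) < 1 - (cmod p)^2"
    by (rule real_5_T[OF norm_ge_zero norm_ge_zero norm_ge_zero norm_ge_zero norm_ge_zero norm_ge_zero
      cid1[of a b p] cid2[where a=a and b=b and p=p] tri3[where a=a and b=b and p=p] h5 hb])
  then show "Tt a b p" unfolding Tt_def by linarith
qed

lemma Tt_C6: "Tt a b p \<longleftrightarrow> C6 a b p"
proof
  assume T: "Tt a b p"
  show "C6 a b p" using T_facts_c[OF T] unfolding C6_def by linarith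
next
  assume h: "C6 a b p"
  have h6: "(cmod a)^2 + (cmod b)^2 - (cmod p)^2 + 2 * cmod (a*b - p) < 1" and hp: "cmod p < 1"
    using h unfolding C6_def by auto
  have "cmod (a - cnj b * p) + cmod (b - cnj a * p) < 1 - (cmod p)^2"
    by (rule real_6_T[OF norm_ge_zero norm_ge_zero norm_ge_zero norm_ge_zero norm_ge_zero norm_ge_zero
      cid1[of a b p] cid2[where a=a and b=b and p=p] tri2[of a b p] h6 hp])
  then show "Tt a b p" unfolding Tt_def by linarith
qed


definition Psi :: "complex \<Rightarrow> complex \<Rightarrow> complex \<Rightarrow> complex \<Rightarrow> complex" where
  "Psi a b p w = (if a*b = p then a else (p*w - a)/(b*w - 1))"
definition PsiH :: "complex \<Rightarrow> complex \<Rightarrow> complex \<Rightarrow> ereal" where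
  "PsiH a b p = (if \<forall>w\<in>ball 0 1. (b*w \<noteq> 1 \<and> a*b \<noteq> p) \<or> a*b = p
     then (SUP w\<in>ball 0 1. ereal (cmod (Psi a b p w))) else \<infinity>)"
definition C3 :: "complex \<Rightarrow> complex \<Rightarrow> complex \<Rightarrow> bool" where
  "C3 a b p \<longleftrightarrow> PsiH a b p < 1 \<and> (a*b = p \<longrightarrow> cmod b < 1)"

lemma SUP_lt1_iff:
  fixes f :: "complex \<Rightarrow> real"
  shows "(SUP w\<in>ball 0 1. ereal (f w)) < 1 \<longleftrightarrow> (\<exists>c<1. \<forall>w\<in>ball 0 1. f w \<le> c)"
proof
  assume "(SUP w\<in>ball 0 1. ereal (f w)) < 1"
  then obtain c where c: "(SUP w\<in>ball 0 1. ereal (f w)) < ereal c" "ereal c < 1"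
    using ereal_dense2 by blast
  have "\<forall>w\<in>ball 0 1. f w \<le> c"
  proof
    fix w :: complex assume "w \<in> ball 0 1"
    then have "ereal (f w) \<le> (SUP w\<in>ball 0 1. ereal (f w))" by (rule SUP_upper)
    then have "ereal (f w) < ereal c" using c(1) by (rule le_less_trans)
    then show "f w \<le> c" by simp
  qed
  then show "\<exists>c<1. \<forall>w\<in>ball 0 1. f w \<le> c" using c(2) by auto
next
  assume "\<exists>c<1. \<forall>w\<in>ball 0 1. f w \<le> c"
  then obtain c where c: "c < 1" "\<forall>w\<in>ball 0 1. f w \<le> c" by blast
  have "(SUP w\<in>ball 0 1. ereal (f w)) \<le> ereal c" using c(2) by (intro SUP_least) simp
  also have "\<dots> < 1" using c(1) by simp
  finally show "(SUP w\<in>ball 0 1. ereal (f w)) < 1" .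
qed

lemma le_eps_real:
  fixes x y K :: real
  assumes "\<And>e. 0 < e \<Longrightarrow> e \<le> 1 \<Longrightarrow> x \<le> y + e * K" "K \<ge> 0"
  shows "x \<le> y"
proof (rule ccontr)
  assume "\<not> x \<le> y"
  then have d: "x - y > 0" by simp
  define e where "e = min 1 ((x - y) / (K + 1))"
  have e0: "0 < e" "e \<le> 1" using d assms(2) unfolding e_def by auto
  have "e * K \<le> ((x - y) / (K + 1)) * K" using assms(2) unfolding e_def by (intro mult_right_mono) auto
  also have "\<dots> < x - y" using d assms(2) by (simp add: field_simps)
  finally show False using assms(1)[OF e0] by simp
qed


lemma nm_lt1: "cmod b < 1 \<Longrightarrow> cmod w \<le> 1 \<Longrightarrow> cmod (b*w) < 1"
proof -
  assume h: "cmod b < 1" "cmod w \<le> 1"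
  have "cmod (b*w) = cmod b * cmod w" by (simp add: norm_mult)
  also have "\<dots> \<le> cmod b * 1" using h by (intro mult_left_mono) auto
  finally show ?thesis using h by simp
qed

lemma nm_le1: "cmod b \<le> 1 \<Longrightarrow> cmod w \<le> 1 \<Longrightarrow> cmod (b*w) \<le> 1"
proof -
  assume h: "cmod b \<le> 1" "cmod w \<le> 1"
  have "cmod (b*w) = cmod b * cmod w" by (simp add: norm_mult)
  also have "\<dots> \<le> cmod b * 1" using h by (intro mult_left_mono) auto
  finally show ?thesis using h by simp
qed

lemma C3_SS_deg:
  assumes deg: "a*b = p"
  shows "C3 a b p \<longleftrightarrow> SS a b p"
proof -
  have ne: "ball (0::complex) 1 \<noteq> {}" by simp
  have PH: "PsiH a b p = ereal (cmod a)" unfolding PsiH_def Psi_def using deg ne by simp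
  have C: "C3 a b p \<longleftrightarrow> cmod a < 1 \<and> cmod b < 1" unfolding C3_def PH using deg by simp
  have fa: "a - p*w = a * (1 - b*w)" for w using deg by (simp add: algebra_simps)
  have "SS a b p \<longleftrightarrow> cmod a < 1 \<and> cmod b < 1"
  proof
    assume S: "SS a b p"
    have a1: "cmod a < 1" using S[unfolded SS_def, rule_format, of 0] by simp
    have b1: "cmod b < 1"
    proof (rule ccontr)
      assume "\<not> cmod b < 1"
      then have bge: "cmod b \<ge> 1" by simp
      then have b0: "b \<noteq> 0" by auto
      have "cmod (1/b) \<le> 1" using bge by (simp add: norm_divide divide_le_eq)
      then have "cmod (a - p*(1/b)) < cmod (1 - b*(1/b))" using S unfolding SS_def by blast
      then show False using b0 by simp
    qed
    show "cmod a < 1 \<and> cmod b < 1" using a1 b1 by simp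
  next
    assume h: "cmod a < 1 \<and> cmod b < 1"
    show "SS a b p" unfolding SS_def
    proof (intro allI impI)
      fix w :: complex assume w: "cmod w \<le> 1"
      have "cmod (b*w) < 1" using h w by (intro nm_lt1) auto
      then have "1 - b*w \<noteq> 0" by auto
      then have "cmod (1 - b*w) > 0" by simp
      then show "cmod (a - p*w) < cmod (1 - b*w)" unfolding fa using h by (simp add: norm_mult)
    qed
  qed
  then show ?thesis using C by simp
qed

lemma C3_SS_nondeg:
  assumes nd: "a*b \<noteq> p"
  shows "C3 a b p \<longleftrightarrow> SS a b p"
proof -
  have PH: "PsiH a b p = (if \<forall>w\<in>ball 0 1. b*w \<noteq> 1 then (SUP w\<in>ball 0 1. ereal (cmod ((p*w - a)/(b*w - 1)))) else \<infinity>)"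
    unfolding PsiH_def Psi_def using nd by simp
  have C: "C3 a b p \<longleftrightarrow> PsiH a b p < 1" unfolding C3_def using nd by simp
  show ?thesis
  proof
    assume "C3 a b p"
    then have P1: "PsiH a b p < 1" using C by simp
    then have ndw: "\<forall>w\<in>ball 0 1. b*w \<noteq> 1" unfolding PH by (cases "\<forall>w\<in>ball 0 1. b*w \<noteq> 1") auto
    then have "(SUP w\<in>ball 0 1. ereal (cmod ((p*w - a)/(b*w - 1)))) < 1" using P1 unfolding PH by simp
    then obtain c where c: "c < 1" "\<forall>w\<in>ball 0 1. cmod ((p*w - a)/(b*w - 1)) \<le> c"
      using SUP_lt1_iff[of "\<lambda>w. cmod ((p*w - a)/(b*w - 1))"] by blast
    have "cmod ((p*0 - a)/(b*0 - 1)) \<le> c" using bspec[OF c(2), of 0] by simp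
    then have c0: "0 \<le> c" using norm_ge_zero order_trans by blast
    have key: "cmod (a - p*w) \<le> c * cmod (1 - b*w)" if w: "w \<in> ball 0 1" for w
    proof -
      have "b*w - 1 \<noteq> 0" using ndw w by auto
      then have "cmod (b*w - 1) > 0" by simp
      moreover have "cmod (p*w - a) / cmod (b*w - 1) \<le> c" using c(2) w by (simp add: norm_divide)
      ultimately have "cmod (p*w - a) \<le> c * cmod (b*w - 1)" by (simp add: divide_le_eq)
      then show ?thesis by (simp add: norm_minus_commute)
    qed
    have b1: "cmod b < 1"
    proof -
      have bl: "cmod b \<le> 1"
      proof (rule ccontr)
        assume "\<not> cmod b \<le> 1"
        then have bg: "cmod b > 1" by simp
        then have b0: "b \<noteq> 0" by auto
        have "1/b \<in> ball 0 1" using bg by (simp add: norm_divide divide_less_eq)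
        then have "b * (1/b) \<noteq> 1" using ndw by blast
        then show False using b0 by simp
      qed
      have "cmod b \<noteq> 1"
      proof
        assume b1: "cmod b = 1"
        then have bb: "b * cnj b = 1" using complex_norm_square[of b] by simp
        define m where "m = cmod (a*b - p)"
        have m0: "m > 0" using nd unfolding m_def by simp
        define K where "K = 1 + cmod p"
        have K0: "K > 0" unfolding K_def by (simp add: add_pos_nonneg)
        define e where "e = min (1/2) (m / (2*K))"
        have e0: "0 < e" "e \<le> 1/2" using m0 K0 unfolding e_def by auto
        have eK: "e * K \<le> m/2" using K0 unfolding e_def by (simp add: min_def field_simps)
        define w where "w = complex_of_real (1 - e) * cnj b"
        have "cmod w = \<bar>1 - e\<bar> * cmod b" unfolding w_def norm_mult norm_of_real complex_mod_cnj ..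
        then have wb: "w \<in> ball 0 1" using e0 b1 by simp
        have bw: "1 - b*w = complex_of_real e" unfolding w_def using bb by (simp add: algebra_simps)
        have ma: "cmod (a - p * cnj b) = m"
        proof -
          have "cmod (a - p * cnj b) = cmod b * cmod (a - p * cnj b)" using b1 by simp
          also have "\<dots> = cmod (a*b - p * (b * cnj b))" by (simp add: norm_mult[symmetric] algebra_simps)
          finally show ?thesis unfolding m_def bb by simp
        qed
        have eqw: "a - p*w = (a - p * cnj b) + complex_of_real e * (p * cnj b)" unfolding w_def by (simp add: algebra_simps)
        have ni: "cmod (a - p * cnj b) - cmod (complex_of_real e * (p * cnj b)) \<le> cmod ((a - p * cnj b) + complex_of_real e * (p * cnj b))"
          by (rule norm_diff_ineq)
        have "cmod (complex_of_real e * (p * cnj b)) = e * cmod p" using e0 b1 by (simp add: norm_mult)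
        then have "cmod (a - p*w) \<ge> m - e * cmod p" using ni ma unfolding eqw by linarith
        moreover have "cmod (a - p*w) \<le> c * e" using key[OF wb] bw e0 by simp
        moreover have "c * e \<le> e" using c c0 e0 by (intro mult_left_le_one_le) auto
        ultimately have "m - e * cmod p \<le> e" by linarith
        then have "m \<le> e * K" unfolding K_def by (simp add: algebra_simps)
        then show False using eK m0 by simp
      qed
      then show ?thesis using bl by simp
    qed
    show "SS a b p" unfolding SS_def
    proof (intro allI impI)
      fix w :: complex assume w: "cmod w \<le> 1"
      have bw1: "cmod (b*w) < 1" using b1 w by (rule nm_lt1)
      then have "1 - b*w \<noteq> 0" by auto
      then have pos: "cmod (1 - b*w) > 0" by simp
      have "cmod (a - p*w) \<le> c * cmod (1 - b*w)"
      proof (rule le_eps_real[of _ _ "1 + cmod p"])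
        fix e :: real assume e: "0 < e" "e \<le> 1"
        define t where "t = 1 - e"
        have t: "0 \<le> t" "t < 1" using e unfolding t_def by auto
        have tw: "complex_of_real t * w \<in> ball 0 1"
        proof -
          have "cmod (complex_of_real t * w) = t * cmod w" using t by (simp add: norm_mult)
          also have "\<dots> \<le> t" using t w by (simp add: mult_left_le)
          finally show ?thesis using t by simp
        qed
        have k: "cmod (a - p*(complex_of_real t * w)) \<le> c * cmod (1 - b*(complex_of_real t * w))" by (rule key[OF tw])
        have eq1: "a - p*w = (a - p*(complex_of_real t * w)) - complex_of_real e * (p*w)" unfolding t_def by (simp add: algebra_simps)
        have A1: "cmod (a - p*w) \<le> cmod (a - p*(complex_of_real t * w)) + e * cmod (p*w)"
          unfolding eq1 using norm_triangle_ineq4[of "a - p*(complex_of_real t * w)" "complex_of_real e * (p*w)"] e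
          by (simp add: norm_mult)
        have A2: "cmod (p*w) \<le> cmod p" using w by (simp add: norm_mult mult_left_le)
        have eq2: "1 - b*(complex_of_real t * w) = (1 - b*w) + complex_of_real e * (b*w)" unfolding t_def by (simp add: algebra_simps)
        have "cmod (complex_of_real e * (b*w)) \<le> e" using bw1 e by (simp add: norm_mult mult_left_le)
        then have A3: "cmod (1 - b*(complex_of_real t * w)) \<le> cmod (1 - b*w) + e"
          unfolding eq2 using norm_triangle_ineq[of "1 - b*w" "complex_of_real e * (b*w)"] by linarith
        have "c * cmod (1 - b*(complex_of_real t * w)) \<le> c * (cmod (1 - b*w) + e)" using c0 A3 by (rule mult_left_mono[rotated])
        also have "\<dots> \<le> c * cmod (1 - b*w) + e" using c c0 e by (simp add: distrib_left mult_left_le_one_le)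
        finally have A4: "c * cmod (1 - b*(complex_of_real t * w)) \<le> c * cmod (1 - b*w) + e" .
        have A5: "e * cmod (p*w) \<le> e * cmod p" using A2 e by (intro mult_left_mono) auto
        show "cmod (a - p*w) \<le> c * cmod (1 - b*w) + e * (1 + cmod p)"
          using A1 A4 A5 k by (simp add: distrib_left)
      qed simp
      also have "\<dots> < cmod (1 - b*w)" using c pos by simp
      finally show "cmod (a - p*w) < cmod (1 - b*w)" .
    qed
  next
    assume S: "SS a b p"
    have "Tt a b p" using S E2_SS Tt_E2 by blast
    then have b1: "cmod b < 1" using Tt_C5 unfolding C5_def by blast
    have cr: "1 - (cmod a)^2 > cmod (b - cnj a * p) \<and>
      (1 - (cmod a)^2) + ((cmod b)^2 - (cmod p)^2) > 2 * cmod (b - cnj a * p)"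
      using S SS_crit[where a=b and b=a and p=p] by simp
    define A where "A = 1 - (cmod a)^2"
    define D where "D = (cmod b)^2 - (cmod p)^2"
    define G where "G = cmod (b - cnj a * p)"
    define k where "k = min A (min (A - G) (A + D - 2*G))"
    have G0: "G \<ge> 0" unfolding G_def by simp
    have AG: "A > G" "A + D > 2*G" using cr unfolding A_def D_def G_def by auto
    have k0: "k > 0" using AG G0 unfolding k_def by simp
    have bound: "(cmod (a - p*w))^2 \<le> (1 - k/4) * (cmod (1 - b*w))^2" if w: "w \<in> ball 0 1" for w
    proof -
      define r where "r = cmod w"
      have r01: "0 \<le> r" "r \<le> 1" using w unfolding r_def by auto
      have "Re ((b - cnj a * p) * w) \<le> G * r" unfolding G_def r_def using complex_Re_le_cmod[of "(b - cnj a * p) * w"] by (simp add: norm_mult)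
      then have d: "A + D * r^2 - 2*G*r \<le> (cmod (1 - b*w))^2 - (cmod (a - p*w))^2"
        using cid3[of b w a p] unfolding r_def A_def D_def by simp
      have e: "A + D * r^2 - 2*G*r = (1-r)^2 * A + 2*r*(1-r)*(A - G) + r^2*(A + D - 2*G)"
        by (simp add: power2_eq_square algebra_simps)
      have "(1-r)^2 * k \<le> (1-r)^2 * A" unfolding k_def by (intro mult_left_mono) auto
      moreover have "(2*r*(1-r)) * k \<le> (2*r*(1-r)) * (A - G)" unfolding k_def using r01 by (intro mult_left_mono) auto
      moreover have "r^2 * k \<le> r^2 * (A + D - 2*G)" unfolding k_def by (intro mult_left_mono) auto
      moreover have "(1-r)^2 * k + (2*r*(1-r)) * k + r^2 * k = k" by (simp add: power2_eq_square algebra_simps)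
      ultimately have "k \<le> A + D * r^2 - 2*G*r" using e by linarith
      then have kk: "(cmod (a - p*w))^2 \<le> (cmod (1 - b*w))^2 - k" using d by simp
      have "cmod (1 - b*w) \<le> 2"
      proof -
        have "cmod (b*w) \<le> 1" using b1 w by (intro nm_le1) auto
        then show ?thesis using norm_triangle_ineq4[of 1 "b*w"] by simp
      qed
      then have "(cmod (1 - b*w))^2 \<le> 2^2" by (intro power_mono) auto
      then have "(cmod (1 - b*w))^2 \<le> 4" by simp
      then have "k * (cmod (1 - b*w))^2 / 4 \<le> k" using k0 by (simp add: divide_le_eq mult_le_cancel_left_pos)
      then show ?thesis using kk by (simp add: algebra_simps)
    qed
    define c where "c = sqrt (1 - k/4)"
    have c1: "c < 1" unfolding c_def using k0 by simp
    have ndw: "\<forall>w\<in>ball 0 1. b*w \<noteq> 1"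
    proof
      fix w :: complex assume "w \<in> ball 0 1"
      then have "cmod (b*w) < 1" using b1 by (intro nm_lt1) auto
      then show "b*w \<noteq> 1" by auto
    qed
    have "\<forall>w\<in>ball 0 1. cmod ((p*w - a)/(b*w - 1)) \<le> c"
    proof
      fix w :: complex assume w: "w \<in> ball 0 1"
      have nz: "cmod (1 - b*w) > 0" using ndw w by auto
      have "(cmod ((p*w - a)/(b*w - 1)))^2 = (cmod (a - p*w))^2 / (cmod (1 - b*w))^2"
        by (simp add: norm_divide power_divide norm_minus_commute)
      also have "\<dots> \<le> 1 - k/4" using bound[OF w] nz by (simp add: divide_le_eq)
      finally show "cmod ((p*w - a)/(b*w - 1)) \<le> c" unfolding c_def by (rule real_le_rsqrt)
    qed
    then have "(SUP w\<in>ball 0 1. ereal (cmod ((p*w - a)/(b*w - 1)))) < 1"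
      using SUP_lt1_iff[of "\<lambda>w. cmod ((p*w - a)/(b*w - 1))"] c1 by blast
    then show "C3 a b p" using C ndw unfolding PH by simp
  qed
qed

lemma C3_SS: "C3 a b p \<longleftrightarrow> SS a b p"
  using C3_SS_deg C3_SS_nondeg by blast


lemma herm_id:
  fixes al de :: real and be y1 y2 :: complex
  shows "(al+de)*(al*(cmod y1)^2 + 2*Re(be * cnj y1 * y2) + de*(cmod y2)^2) - (al*de - (cmod be)^2)*((cmod y1)^2+(cmod y2)^2)
    = (cmod (complex_of_real al * y1 + be * y2))^2 + (cmod (cnj be * y1 + complex_of_real de * y2))^2"
  unfolding cmod_power2 by (simp add: algebra_simps power2_eq_square)

lemma bform:
  fixes a b x y1 y2 :: complex
  shows "(cmod y1)^2 + (cmod y2)^2 - (cmod (a*y1 + x*y2))^2 - (cmod (x*y1 + b*y2))^2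
    = (1 - (cmod a)^2 - (cmod x)^2)*(cmod y1)^2 + 2*Re(-(cnj a * x + cnj x * b) * cnj y1 * y2) + (1 - (cmod x)^2 - (cmod b)^2)*(cmod y2)^2"
  unfolding cmod_power2 by (simp add: algebra_simps power2_eq_square)

lemma dform:
  fixes a b x :: complex
  shows "(1 - (cmod a)^2 - (cmod x)^2)*(1 - (cmod x)^2 - (cmod b)^2) - (cmod (-(cnj a * x + cnj x * b)))^2
    = 1 - (cmod a)^2 - (cmod b)^2 - 2*(cmod x)^2 + (cmod (a*b - x^2))^2"
  unfolding cmod_power2 by (simp add: algebra_simps power2_eq_square)

lemma norm_vec2_sq:
  fixes v :: "complex^2"
  shows "(norm v)^2 = (cmod (v$1))^2 + (cmod (v$2))^2"
  unfolding norm_vec_def L2_set_def by (simp add: sum_2)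

lemma mvec2:
  fixes B :: "complex^2^2" and u :: "complex^2"
  shows "(B *v u)$1 = B$1$1 * u$1 + B$1$2 * u$2" "(B *v u)$2 = B$2$1 * u$1 + B$2$2 * u$2"
  unfolding matrix_vector_mult_def by (simp_all add: sum_2)

lemma two_neq: "(1::2) \<noteq> 2" by simp

definition C8 :: "complex \<Rightarrow> complex \<Rightarrow> complex \<Rightarrow> bool" where
  "C8 a b p \<longleftrightarrow> (\<exists>B::complex^2^2. mat_opnorm B < 1 \<and> B$1$1 = a \<and> B$2$2 = b \<and> det B = p)"
definition C9 :: "complex \<Rightarrow> complex \<Rightarrow> complex \<Rightarrow> bool" where
  "C9 a b p \<longleftrightarrow> (\<exists>B::complex^2^2. mat_opnorm B < 1 \<and> transpose B = B \<and> B$1$1 = a \<and> B$2$2 = b \<and> det B = p)"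

lemma C9_C8: "C9 a b p \<Longrightarrow> C8 a b p"
  unfolding C9_def C8_def by blast

lemma C8_E2:
  assumes "C8 a b p" shows "E2 a b p"
proof -
  obtain B :: "complex^2^2" where B: "mat_opnorm B < 1" "B$1$1 = a" "B$2$2 = b" "det B = p"
    using assms unfolding C8_def by blast
  define x where "x = B$1$2"
  define y where "y = B$2$1"
  have pdet: "p = a*b - x*y" using B unfolding x_def y_def det_2 by simp
  show ?thesis unfolding E2_def
  proof (intro allI impI notI)
    fix z w :: complex assume z: "cmod z \<le> 1" and w: "cmod w \<le> 1" and zero: "1 - a*z - b*w + p*z*w = 0"
    have D: "(1 - a*z)*(1 - b*w) = x*w*(y*z)" using zero unfolding pdet by (simp add: algebra_simps)
    obtain q1 q2 where nz: "q1 \<noteq> 0 \<or> q2 \<noteq> 0" and e1: "(1 - a*z)*q1 = x*w*q2" and e2: "(1 - b*w)*q2 = y*z*q1"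
    proof (cases "x*w \<noteq> 0 \<or> 1 - a*z \<noteq> 0")
      case True
      have "(1 - b*w)*(1 - a*z) = (1 - a*z)*(1 - b*w)" by (rule mult.commute)
      also have "\<dots> = x*w*(y*z)" by (rule D)
      also have "\<dots> = y*z*(x*w)" by (rule mult.commute)
      finally have e2: "(1 - b*w)*(1 - a*z) = y*z*(x*w)" .
      have e1: "(1 - a*z)*(x*w) = x*w*(1 - a*z)" by (rule mult.commute)
      show ?thesis by (rule that[of "x*w" "1 - a*z", OF True e1 e2])
    next
      case F1: False
      show ?thesis
      proof (cases "1 - b*w \<noteq> 0 \<or> y*z \<noteq> 0")
        case True
        have e1: "(1 - a*z)*(1 - b*w) = x*w*(y*z)" by (rule D)
        have e2: "(1 - b*w)*(y*z) = y*z*(1 - b*w)" by (rule mult.commute)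
        show ?thesis by (rule that[of "1 - b*w" "y*z", OF True e1 e2])
      next
        case False
        have "1 - a*z = 0" "y*z = 0" using False F1 by auto
        then show ?thesis by (intro that[of 1 0]) auto
      qed
    qed
    define v :: "complex^2" where "v = (\<chi> i. if i = 1 then q1 else q2)"
    define u :: "complex^2" where "u = (\<chi> i. if i = 1 then z*q1 else w*q2)"
    have vq: "v$1 = q1" "v$2 = q2" unfolding v_def by simp_all
    have u1: "u$1 = z*q1" "u$2 = w*q2" unfolding u_def by simp_all
    have Bu: "B *v u = v"
    proof -
      have h1: "(B *v u)$1 = v$1" unfolding mvec2 u1 vq B(2) x_def[symmetric] using e1 by (simp add: algebra_simps)
      have h2: "(B *v u)$2 = v$2" unfolding mvec2 u1 vq B(3) y_def[symmetric] using e2 by (simp add: algebra_simps)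
      have "(B *v u)$i = v$i" for i :: 2
        using exhaust_2[of i] by (elim disjE) (simp_all only: h1 h2)
      then have "\<forall>i. (B *v u)$i = v$i" by blast
      then show ?thesis by (simp add: vec_eq_iff)
    qed
    have nuv: "norm u \<le> norm v"
    proof (rule norm_le_componentwise_cart)
      fix i :: 2
      have i1: "norm (u$1) \<le> norm (v$1)"
        using mult_left_le_one_le[of "cmod q1" "cmod z"] z by (simp add: u1 vq norm_mult)
      have i2: "norm (u$2) \<le> norm (v$2)"
        using mult_left_le_one_le[of "cmod q2" "cmod w"] w by (simp add: u1 vq norm_mult)
      show "norm (u$i) \<le> norm (v$i)"
        using exhaust_2[of i] by (elim disjE) (simp_all only: i1 i2)
    qed
    have "v \<noteq> 0"
    proof
      assume "v = 0"
      then have "q1 = 0" "q2 = 0" using vq by auto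
      then show False using nz by simp
    qed
    then have nv: "norm v > 0" by simp
    have "norm v = norm (B *v u)" using Bu by simp
    also have "\<dots> \<le> mat_opnorm B * norm u" unfolding mat_opnorm_def
      by (rule onorm[OF matrix_vector_mul_bounded_linear])
    also have "\<dots> \<le> mat_opnorm B * norm v"
    proof (rule mult_left_mono[OF nuv])
      show "0 \<le> mat_opnorm B" unfolding mat_opnorm_def by (rule onorm_pos_le[OF matrix_vector_mul_bounded_linear])
    qed
    also have "\<dots> < norm v" using B(1) nv by simp
    finally show False by simp
  qed
qed


lemma C6_C9:
  assumes "C6 a b p" shows "C9 a b p"
proof -
  have h6: "(cmod a)^2 + (cmod b)^2 - (cmod p)^2 + 2 * cmod (a*b - p) < 1" and hp: "cmod p < 1"
    using assms unfolding C6_def by auto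
  define x where "x = csqrt (a*b - p)"
  have x2: "x^2 = a*b - p" unfolding x_def by simp
  have xm: "(cmod x)^2 = cmod (a*b - p)" using x2 by (metis norm_power)
  have px: "a*b - x^2 = p" using x2 by simp
  define B :: "complex^2^2" where "B = (\<chi> i j. if i = 1 then (if j = 1 then a else x) else (if j = 1 then x else b))"
  have Be: "B$1$1 = a" "B$1$2 = x" "B$2$1 = x" "B$2$2 = b" unfolding B_def by simp_all
  have tr: "transpose B = B"
  proof -
    have "(transpose B)$i$j = B$i$j" for i j :: 2
      unfolding transpose_def B_def using exhaust_2[of i] exhaust_2[of j] by auto
    then show ?thesis by (simp add: vec_eq_iff)
  qed
  have dt: "det B = p" unfolding det_2 Be using px by (simp add: power2_eq_square)
  define al where "al = 1 - (cmod a)^2 - (cmod x)^2"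
  define de where "de = 1 - (cmod x)^2 - (cmod b)^2"
  define be where "be = -(cnj a * x + cnj x * b)"
  define d where "d = al*de - (cmod be)^2"
  define t where "t = al + de"
  have dd: "d = 1 - (cmod a)^2 - (cmod b)^2 - 2*(cmod x)^2 + (cmod p)^2"
    unfolding d_def al_def de_def be_def using dform[of a x b] px by simp
  have d0: "d > 0" using h6 xm dd by simp
  have "(cmod p)^2 < 1" using hp abs_square_less_1[of "cmod p"] by simp
  then have td: "t > d" unfolding t_def using dd xm unfolding al_def de_def by simp
  have t0: "t > 0" using td d0 by simp
  define c where "c = sqrt (1 - d/t)"
  have c1: "c < 1" unfolding c_def using d0 t0 by simp
  have dt1: "d/t < 1" using td t0 by simp
  have bnd: "norm (B *v v) \<le> c * norm v" for v :: "complex^2"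
  proof -
    define y1 where "y1 = v$1"
    define y2 where "y2 = v$2"
    define N where "N = (cmod y1)^2 + (cmod y2)^2"
    have nv: "(norm v)^2 = N" unfolding N_def y1_def y2_def by (rule norm_vec2_sq)
    have nb: "(norm (B *v v))^2 = (cmod (a * y1 + x * y2))^2 + (cmod (x * y1 + b * y2))^2"
      unfolding norm_vec2_sq mvec2 Be y1_def y2_def ..
    define F where "F = al*(cmod y1)^2 + 2*Re(be * cnj y1 * y2) + de*(cmod y2)^2"
    have fb: "N - (norm (B *v v))^2 = F"
    proof -
      have "N - (norm (B *v v))^2 = (cmod y1)^2 + (cmod y2)^2 - (cmod (a * y1 + x * y2))^2 - (cmod (x * y1 + b * y2))^2"
        unfolding nb N_def by simp
      also have "\<dots> = F" unfolding F_def al_def de_def be_def by (rule bform)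
      finally show ?thesis .
    qed
    have "t * F - d * N \<ge> 0" unfolding t_def F_def d_def N_def herm_id by simp
    then have "d * N \<le> t * F" by simp
    then have "(d/t) * N \<le> F" using t0 by (simp add: field_simps)
    moreover have "(1 - d/t) * N = N - (d/t) * N" by (simp add: algebra_simps)
    ultimately have "(norm (B *v v))^2 \<le> (1 - d/t) * N" using fb by linarith
    also have "\<dots> = (c * norm v)^2" unfolding c_def using dt1 nv by (simp add: power_mult_distrib)
    finally have "(norm (B *v v))^2 \<le> (c * norm v)^2" .
    moreover have "c * norm v \<ge> 0" unfolding c_def using dt1 by simp
    ultimately show ?thesis by (rule power2_le_imp_le)
  qed
  have "mat_opnorm B \<le> c" unfolding mat_opnorm_def by (rule onorm_le) (rule bnd)
  then have "mat_opnorm B < 1" using c1 by simp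
  then show ?thesis unfolding C9_def using tr Be dt by blast
qed


lemma esym_0: "esym m z 0 = 1"
proof -
  have E: "{S. S \<subseteq> {..<m} \<and> card S = 0} = {{}}"
  proof (intro equalityI subsetI)
    fix S assume "S \<in> {S. S \<subseteq> {..<m} \<and> card S = 0}"
    then have "S \<subseteq> {..<m}" "card S = 0" by auto
    moreover then have "finite S" using finite_subset by blast
    ultimately show "S \<in> {{}}" by simp
  qed auto
  show ?thesis unfolding esym_def E by simp
qed

lemma esym_gt: "k > m \<Longrightarrow> esym m z k = 0"
proof -
  assume k: "k > m"
  have E: "{S. S \<subseteq> {..<m} \<and> card S = k} = {}"
  proof (rule ccontr)
    assume "\<not> ?thesis"
    then obtain S where S: "S \<subseteq> {..<m}" "card S = k" by auto
    then have "card S \<le> card {..<m}" by (intro card_mono) auto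
    then show False using S k by simp
  qed
  show ?thesis unfolding esym_def E by simp
qed

lemma esym_top: "esym m z m = (\<Prod>i<m. z i)"
proof -
  have "{S. S \<subseteq> {..<m} \<and> card S = m} = {{..<m}}"
  proof (intro equalityI subsetI)
    fix S assume "S \<in> {S. S \<subseteq> {..<m} \<and> card S = m}"
    then have "S \<subseteq> {..<m}" "card S = card {..<m}" by auto
    then have "S = {..<m}" by (intro card_subset_eq) auto
    then show "S \<in> {{..<m}}" by simp
  qed auto
  then show ?thesis unfolding esym_def by simp
qed

lemma esym_rec: "esym (Suc m) z (Suc k) = esym m z (Suc k) + z m * esym m z k"
proof -
  define A1 where "A1 = {S. S \<subseteq> {..<m} \<and> card S = Suc k}"
  define B where "B = {S. S \<subseteq> {..<m} \<and> card S = k}"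
  define A2 where "A2 = insert m ` B"
  have fin1: "finite A1" unfolding A1_def by (rule finite_subset[of _ "Pow {..<m}"]) auto
  have finB: "finite B" unfolding B_def by (rule finite_subset[of _ "Pow {..<m}"]) auto
  have fin2: "finite A2" unfolding A2_def using finB by simp
  have eq: "{S. S \<subseteq> {..<Suc m} \<and> card S = Suc k} = A1 \<union> A2"
  proof (intro equalityI subsetI)
    fix S assume S: "S \<in> {S. S \<subseteq> {..<Suc m} \<and> card S = Suc k}"
    then have S1: "S \<subseteq> {..<Suc m}" and S2: "card S = Suc k" by auto
    have finS: "finite S" using S1 finite_subset by blast
    show "S \<in> A1 \<union> A2"
    proof (cases "m \<in> S")
      case True
      have "S - {m} \<subseteq> {..<m}" using S1 by auto
      moreover have "card (S - {m}) = k" using S2 True finS by simp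
      ultimately have "S - {m} \<in> B" unfolding B_def by simp
      moreover have "S = insert m (S - {m})" using True by auto
      ultimately show ?thesis unfolding A2_def by blast
    next
      case False
      then have "S \<subseteq> {..<m}" using S1 by (auto simp: less_Suc_eq)
      then show ?thesis unfolding A1_def using S2 by simp
    qed
  next
    fix S assume "S \<in> A1 \<union> A2"
    then show "S \<in> {S. S \<subseteq> {..<Suc m} \<and> card S = Suc k}"
    proof
      assume "S \<in> A1" then show ?thesis unfolding A1_def by auto
    next
      assume "S \<in> A2"
      then obtain T where T: "T \<in> B" "S = insert m T" unfolding A2_def by auto
      have "finite T" "m \<notin> T" using T unfolding B_def by (auto intro: finite_subset)
      then show ?thesis using T unfolding B_def by auto
    qed
  qed
  have disj: "A1 \<inter> A2 = {}" unfolding A1_def A2_def by auto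
  have inj: "inj_on (insert m) B"
  proof (rule inj_onI)
    fix S T assume "S \<in> B" "T \<in> B" "insert m S = insert m T"
    moreover have "m \<notin> S" "m \<notin> T" using \<open>S \<in> B\<close> \<open>T \<in> B\<close> unfolding B_def by auto
    ultimately show "S = T" by (metis Diff_insert_absorb)
  qed
  have s2: "(\<Sum>S\<in>A2. \<Prod>i\<in>S. z i) = z m * esym m z k"
  proof -
    have "(\<Sum>S\<in>A2. \<Prod>i\<in>S. z i) = (\<Sum>T\<in>B. \<Prod>i\<in>insert m T. z i)"
      unfolding A2_def using inj by (simp add: sum.reindex)
    also have "\<dots> = (\<Sum>T\<in>B. z m * (\<Prod>i\<in>T. z i))"
    proof (rule sum.cong)
      fix T assume "T \<in> B"
      then have "finite T" "m \<notin> T" unfolding B_def by (auto intro: finite_subset)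
      then show "(\<Prod>i\<in>insert m T. z i) = z m * (\<Prod>i\<in>T. z i)" by simp
    qed simp
    also have "\<dots> = z m * esym m z k" unfolding esym_def B_def by (simp add: sum_distrib_left)
    finally show ?thesis .
  qed
  have "esym (Suc m) z (Suc k) = (\<Sum>S\<in>A1 \<union> A2. \<Prod>i\<in>S. z i)" unfolding esym_def eq ..
  also have "\<dots> = (\<Sum>S\<in>A1. \<Prod>i\<in>S. z i) + (\<Sum>S\<in>A2. \<Prod>i\<in>S. z i)"
    by (rule sum.union_disjoint[OF fin1 fin2 disj])
  also have "(\<Sum>S\<in>A1. \<Prod>i\<in>S. z i) = esym m z (Suc k)" unfolding esym_def A1_def ..
  finally show ?thesis using s2 by simp
qed

lemma esym_cnj: "esym m (\<lambda>i. cnj (z i)) k = cnj (esym m z k)"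
  unfolding esym_def by simp

lemma esym_bound:
  assumes z: "\<forall>i<m. cmod (z i) < 1" and k: "1 \<le> k" "k \<le> m"
  shows "cmod (esym m z k) < real (m choose k)"
proof -
  define A where "A = {S. S \<subseteq> {..<m} \<and> card S = k}"
  have finA: "finite A" unfolding A_def by (rule finite_subset[of _ "Pow {..<m}"]) auto
  have cardA: "card A = m choose k" unfolding A_def using n_subsets[of "{..<m}" k] by simp
  have "{..<k} \<in> A" unfolding A_def using k by auto
  then have neA: "A \<noteq> {}" by auto
  have lt: "cmod (\<Prod>i\<in>S. z i) < 1" if S: "S \<in> A" for S
  proof -
    have S1: "S \<subseteq> {..<m}" "card S = k" using S unfolding A_def by auto
    have finS: "finite S" using S1(1) finite_subset by blast
    have "S \<noteq> {}" using S1 k finS by auto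
    then obtain i0 where i0: "i0 \<in> S" by auto
    have "cmod (\<Prod>i\<in>S. z i) = (\<Prod>i\<in>S. cmod (z i))" by (simp add: prod_norm)
    also have "\<dots> = cmod (z i0) * (\<Prod>i\<in>S - {i0}. cmod (z i))" using finS i0 by (simp add: prod.remove)
    also have "\<dots> \<le> cmod (z i0) * 1"
    proof (rule mult_left_mono)
      show "(\<Prod>i\<in>S - {i0}. cmod (z i)) \<le> 1"
      proof (rule prod_le_1)
        fix i assume "i \<in> S - {i0}"
        then have "i < m" using S1 by auto
        then show "0 \<le> cmod (z i) \<and> cmod (z i) \<le> 1" using z by (simp add: less_imp_le)
      qed
    qed simp
    also have "\<dots> < 1" using z i0 S1 by auto
    finally show ?thesis .
  qed
  have "cmod (esym m z k) \<le> (\<Sum>S\<in>A. cmod (\<Prod>i\<in>S. z i))" unfolding esym_def A_def[symmetric] by (rule norm_sum)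
  also have "\<dots> < (\<Sum>S\<in>A. 1)" by (rule sum_strict_mono[OF finA neA lt])
  also have "\<dots> = real (m choose k)" using cardA by simp
  finally show ?thesis .
qed


definition Pm :: "nat \<Rightarrow> (nat \<Rightarrow> complex) \<Rightarrow> complex poly" where
  "Pm m c = (\<Sum>j\<le>m. monom ((-1)^(m-j) * c (m-j)) j)"
definition Rm :: "nat \<Rightarrow> (nat \<Rightarrow> complex) \<Rightarrow> complex poly" where
  "Rm m c = (\<Sum>j\<le>m. monom ((-1)^j * cnj (c j)) j)"

lemma coeff_summonom: "coeff (\<Sum>j\<le>m. monom (h j) j) i = (if i \<le> m then h i else 0)"
  by (simp add: coeff_sum coeff_monom)

lemma coeff_Pm: "coeff (Pm m c) i = (if i \<le> m then (-1)^(m-i) * c (m-i) else 0)"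
  unfolding Pm_def coeff_summonom ..

lemma coeff_Rm: "coeff (Rm m c) i = (if i \<le> m then (-1)^i * cnj (c i) else 0)"
  unfolding Rm_def coeff_summonom ..

lemma lin_mult: fixes q :: "complex poly" shows "q * [:-a, 1:] = smult (-a) q + pCons 0 q"
  by (simp add: mult_pCons_right smult_1_left)

lemma lin_mult2: fixes q :: "complex poly" shows "q * [:1, -a:] = q + pCons 0 (smult (-a) q)"
  by (simp add: mult_pCons_right smult_1_left)

lemma vieta_coeff:
  "coeff (\<Prod>i<m. [:-z i, 1:]) j = (if j \<le> m then (-1)^(m-j) * esym m z (m-j) else 0)"
proof (induction m arbitrary: j)
  case 0
  then show ?case by (simp add: esym_0 coeff_1)
next
  case (Suc m)
  define q where "q = (\<Prod>i<m. [:-z i, 1:])"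
  have P: "(\<Prod>i<Suc m. [:-z i, 1:]) = smult (- z m) q + pCons 0 q"
    unfolding q_def by (simp add: lin_mult)
  show ?case
  proof (cases j)
    case 0
    have "coeff (\<Prod>i<Suc m. [:-z i, 1:]) j = - z m * ((-1)^m * esym m z m)"
      unfolding P using 0 Suc.IH[of 0] q_def by simp
    also have "\<dots> = (-1)^(Suc m) * esym (Suc m) z (Suc m)"
      using esym_rec[of m z m] esym_gt[of m "Suc m" z] by simp
    finally show ?thesis using 0 by simp
  next
    case (Suc i)
    have c: "coeff (\<Prod>i<Suc m. [:-z i, 1:]) j = - z m * coeff q (Suc i) + coeff q i"
      unfolding P using Suc by simp
    show ?thesis
    proof (cases "i \<le> m")
      case False
      then show ?thesis using c Suc.IH[of i] Suc.IH[of "Suc i"] q_def \<open>j = Suc i\<close> by simp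
    next
      case True
      show ?thesis
      proof (cases "i = m")
        case True
        then show ?thesis using c Suc.IH[of i] Suc.IH[of "Suc i"] q_def \<open>j = Suc i\<close> by (simp add: esym_0)
      next
        case False
        then have im: "i < m" using \<open>i \<le> m\<close> by simp
        define k where "k = m - Suc i"
        have mk: "m - i = Suc k" "m - Suc i = k" "Suc m - j = Suc k" using im \<open>j = Suc i\<close> unfolding k_def by auto
        have "coeff (\<Prod>i<Suc m. [:-z i, 1:]) j = - z m * ((-1)^k * esym m z k) + (-1)^(Suc k) * esym m z (Suc k)"
          unfolding c using Suc.IH[of i] Suc.IH[of "Suc i"] q_def im mk by simp
        also have "\<dots> = (-1)^(Suc k) * esym (Suc m) z (Suc k)" using esym_rec[of m z k] by (simp add: algebra_simps)
        finally show ?thesis using mk \<open>j = Suc i\<close> im by simp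
      qed
    qed
  qed
qed

lemma rvieta_coeff:
  "coeff (\<Prod>i<m. [:1, -w i:]) j = (-1)^j * esym m w j"
proof (induction m arbitrary: j)
  case 0
  then show ?case by (cases j) (simp_all add: esym_0 coeff_1 esym_gt)
next
  case (Suc m)
  define q where "q = (\<Prod>i<m. [:1, -w i:])"
  have P: "(\<Prod>i<Suc m. [:1, -w i:]) = q + pCons 0 (smult (- w m) q)"
    unfolding q_def by (simp add: lin_mult2)
  show ?case
  proof (cases j)
    case 0
    then show ?thesis unfolding P using Suc.IH[of 0] q_def by (simp add: esym_0)
  next
    case (Suc i)
    have "coeff (\<Prod>i<Suc m. [:1, -w i:]) j = (-1)^(Suc i) * esym m w (Suc i) - w m * ((-1)^i * esym m w i)"
      unfolding P using Suc Suc.IH[of i] Suc.IH[of "Suc i"] q_def by simp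
    also have "\<dots> = (-1)^(Suc i) * esym (Suc m) w (Suc i)" using esym_rec[of m w i] by (simp add: algebra_simps)
    finally show ?thesis using Suc by simp
  qed
qed

lemma Pm_prod:
  assumes "\<forall>k\<le>m. c k = esym m z k"
  shows "Pm m c = (\<Prod>i<m. [:-z i, 1:])"
proof (rule poly_eqI)
  fix j
  show "coeff (Pm m c) j = coeff (\<Prod>i<m. [:-z i, 1:]) j"
    unfolding coeff_Pm vieta_coeff using assms by simp
qed

lemma Rm_prod:
  assumes "\<forall>k\<le>m. c k = esym m z k"
  shows "Rm m c = (\<Prod>i<m. [:1, - cnj (z i):])"
proof (rule poly_eqI)
  fix j
  show "coeff (Rm m c) j = coeff (\<Prod>i<m. [:1, - cnj (z i):]) j"
    unfolding coeff_Rm rvieta_coeff esym_cnj using assms esym_gt[of m j z] by simp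
qed

lemma factor_roots:
  assumes c0: "c 0 = 1" and roots: "\<forall>x. poly (Pm m c) x = 0 \<longrightarrow> cmod x < 1"
  shows "\<exists>z. (\<forall>i<m. cmod (z i) < 1) \<and> (\<forall>k\<le>m. c k = esym m z k)"
proof -
  define P where "P = Pm m c"
  have cm: "coeff P m = 1" unfolding P_def coeff_Pm using c0 by simp
  have dg: "degree P = m"
  proof (rule antisym)
    show "degree P \<le> m" by (rule degree_le) (simp add: P_def coeff_Pm)
    show "m \<le> degree P" using cm by (intro le_degree) simp
  qed
  have lc: "lead_coeff P = 1" using cm dg by simp
  obtain root where R: "smult (lead_coeff P) (\<Prod>i<degree P. [:-root i, 1:]) = P"
    using complex_poly_decompose' by blast
  then have PR: "P = (\<Prod>i<m. [:-root i, 1:])" using lc dg by simp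
  have rt: "cmod (root i) < 1" if "i < m" for i
  proof -
    have "poly P (root i) = (\<Prod>l<m. root i - root l)" unfolding PR by (simp add: poly_prod)
    also have "\<dots> = 0" using that by (intro prod_zero) auto
    finally show ?thesis using roots unfolding P_def by blast
  qed
  have ce: "c k = esym m root k" if "k \<le> m" for k
  proof -
    have "coeff P (m - k) = coeff (\<Prod>i<m. [:-root i, 1:]) (m - k)" unfolding PR ..
    then have "(-1)^k * c k = (-1)^k * esym m root k" unfolding P_def coeff_Pm vieta_coeff using that by simp
    then show ?thesis by simp
  qed
  show ?thesis using rt ce by blast
qed


lemma sign_lemma: "i \<le> m \<Longrightarrow> (-1::complex)^(Suc m) * (-1)^(Suc i) = (-1)^(m-i)"
proof -
  assume "i \<le> m"
  then obtain d where d: "m = i + d" using le_Suc_ex by blast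
  have "(-1::complex)^(Suc m) * (-1)^(Suc i) = (-1)^(Suc m + Suc i)" by (simp add: power_add)
  also have "Suc m + Suc i = d + 2*(Suc i)" using d by simp
  also have "(-1::complex)^(d + 2*(Suc i)) = (-1)^d" by (simp add: power_add power_mult)
  finally show ?thesis using d by simp
qed

lemma cpos: "cmod p < 1 \<Longrightarrow> 1 - complex_of_real ((cmod p)^2) \<noteq> 0"
proof
  assume "cmod p < 1" "1 - complex_of_real ((cmod p)^2) = 0"
  then have "(cmod p)^2 = 1" by (metis eq_iff_diff_eq_0 of_real_eq_1_iff)
  then show False using \<open>cmod p < 1\<close> abs_square_less_1[of "cmod p"] by simp
qed

lemma pcnj: "p * cnj p = complex_of_real ((cmod p)^2)"
  by (rule complex_norm_square[symmetric])

lemma Sprime_rel: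
  fixes S :: "nat \<Rightarrow> complex"
  assumes hp: "cmod p < 1" and k: "k \<le> n"
  defines "c \<equiv> 1 - complex_of_real ((cmod p)^2)"
  shows "(S k - p * cnj (S (n-k))) / c + p * cnj ((S (n-k) - p * cnj (S (n-(n-k)))) / c) = S k"
proof -
  have c0: "c \<noteq> 0" unfolding c_def using cpos[OF hp] .
  have cc: "cnj c = c" unfolding c_def by simp
  have nn: "n - (n-k) = k" using k by simp
  have 1: "cnj ((S (n-k) - p * cnj (S k)) / c) = (cnj (S (n-k)) - cnj p * S k) / c" using cc by simp
  have "(S k - p * cnj (S (n-k))) / c + p * cnj ((S (n-k) - p * cnj (S (n-(n-k)))) / c)
      = (S k - p * cnj (S (n-k))) / c + (p * (cnj (S (n-k)) - cnj p * S k)) / c" unfolding nn 1 by simp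
  also have "\<dots> = (S k - p * cnj (S (n-k)) + p * (cnj (S (n-k)) - cnj p * S k)) / c"
    by (rule add_divide_distrib[symmetric])
  also have "\<dots> = S k * (1 - p * cnj p) / c" by (simp add: algebra_simps)
  also have "\<dots> = S k" unfolding pcnj c_def[symmetric] using c0 by simp
  finally show ?thesis .
qed

lemma identA:
  fixes S :: "nat \<Rightarrow> complex"
  assumes S0: "S 0 = 1" and Sn: "S (Suc m) = p" and hp: "cmod p < 1"
  defines "c \<equiv> 1 - complex_of_real ((cmod p)^2)"
  defines "S' \<equiv> (\<lambda>k. (S k - p * cnj (S (Suc m - k))) / c)"
  shows "Pm (Suc m) S - smult ((-1)^(Suc m) * p) (Rm (Suc m) S) = smult c (pCons 0 (Pm m S'))"
proof (rule poly_eqI)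
  fix j
  have c0: "c \<noteq> 0" unfolding c_def using cpos[OF hp] .
  show "coeff (Pm (Suc m) S - smult ((-1)^(Suc m) * p) (Rm (Suc m) S)) j = coeff (smult c (pCons 0 (Pm m S'))) j"
  proof (cases j)
    case 0
    then show ?thesis using S0 Sn by (simp add: coeff_Pm coeff_Rm)
  next
    case (Suc i)
    show ?thesis
    proof (cases "i \<le> m")
      case True
      have e: "Suc m - (m - i) = Suc i" using True by simp
      have "coeff (Pm (Suc m) S - smult ((-1)^(Suc m) * p) (Rm (Suc m) S)) j
          = (-1)^(m-i) * S (m-i) - (-1)^(Suc m) * p * ((-1)^(Suc i) * cnj (S (Suc i)))"
        using Suc True by (simp add: coeff_Pm coeff_Rm)
      also have "\<dots> = (-1)^(m-i) * (S (m-i) - p * cnj (S (Suc i)))"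
        using sign_lemma[OF True] by (simp add: algebra_simps)
      also have "\<dots> = c * ((-1)^(m-i) * S' (m-i))" unfolding S'_def e using c0 by simp
      also have "\<dots> = coeff (smult c (pCons 0 (Pm m S'))) j" using Suc True by (simp add: coeff_Pm)
      finally show ?thesis .
    next
      case False
      then show ?thesis using Suc by (simp add: coeff_Pm coeff_Rm)
    qed
  qed
qed

lemma identB:
  fixes S :: "nat \<Rightarrow> complex"
  assumes S0: "S 0 = 1" and Sn: "S (Suc m) = p" and hp: "cmod p < 1"
  defines "c \<equiv> 1 - complex_of_real ((cmod p)^2)"
  defines "S' \<equiv> (\<lambda>k. (S k - p * cnj (S (Suc m - k))) / c)"
  shows "Pm (Suc m) S = pCons 0 (Pm m S') + smult ((-1)^(Suc m) * p) (Rm m S')"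
proof (rule poly_eqI)
  fix j
  have c0: "c \<noteq> 0" unfolding c_def using cpos[OF hp] .
  have S'0: "S' 0 = 1" unfolding S'_def using S0 Sn c0 by (simp add: pcnj c_def)
  have rel: "S' k + p * cnj (S' (Suc m - k)) = S k" if "k \<le> Suc m" for k
    unfolding S'_def c_def using Sprime_rel[OF hp that, of S] by simp
  show "coeff (Pm (Suc m) S) j = coeff (pCons 0 (Pm m S') + smult ((-1)^(Suc m) * p) (Rm m S')) j"
  proof (cases j)
    case 0
    then show ?thesis using S0 Sn S'0 by (simp add: coeff_Pm coeff_Rm)
  next
    case (Suc i)
    show ?thesis
    proof (cases "i < m")
      case True
      have e: "Suc m - (m - i) = Suc i" using True by simp
      have "coeff (pCons 0 (Pm m S') + smult ((-1)^(Suc m) * p) (Rm m S')) j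
          = (-1)^(m-i) * S' (m-i) + (-1)^(Suc m) * p * ((-1)^(Suc i) * cnj (S' (Suc i)))"
        using Suc True by (simp add: coeff_Pm coeff_Rm)
      also have "\<dots> = (-1)^(m-i) * (S' (m-i) + p * cnj (S' (Suc i)))"
        using sign_lemma[of i m] True by (simp add: algebra_simps)
      also have "\<dots> = (-1)^(m-i) * S (m-i)" using rel[of "m-i"] e by simp
      also have "\<dots> = coeff (Pm (Suc m) S) j" using Suc True by (simp add: coeff_Pm)
      finally show ?thesis by simp
    next
      case False
      show ?thesis
      proof (cases "i = m")
        case True
        have l: "coeff (Pm (Suc m) S) j = 1" using Suc True S0 by (simp add: coeff_Pm)
        have r: "coeff (pCons 0 (Pm m S') + smult ((-1)^(Suc m) * p) (Rm m S')) j = 1"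
          using Suc True S'0 by (simp add: coeff_Pm coeff_Rm)
        show ?thesis using l r by simp
      next
        case False
        then show ?thesis using Suc \<open>\<not> i < m\<close> by (simp add: coeff_Pm coeff_Rm)
      qed
    qed
  qed
qed

lemma fac_ineq:
  assumes "cmod x \<ge> 1" "cmod z < 1"
  shows "cmod (1 - cnj z * x) \<le> cmod (x - z)"
proof -
  have id: "(cmod (x - z))^2 - (cmod (1 - cnj z * x))^2 = ((cmod x)^2 - 1) * (1 - (cmod z)^2)"
    unfolding cmod_power2 by (simp add: algebra_simps power2_eq_square)
  have "(cmod x)^2 \<ge> 1" using assms(1) by (metis abs_of_nonneg norm_ge_zero one_le_power)
  moreover have "(cmod z)^2 \<le> 1" using assms(2) by (simp add: abs_square_le_1 less_imp_le)
  ultimately have "((cmod x)^2 - 1) * (1 - (cmod z)^2) \<ge> 0" by simp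
  then have "(cmod (1 - cnj z * x))^2 \<le> (cmod (x - z))^2" using id by linarith
  then show ?thesis by (rule power2_le_imp_le) simp
qed

lemma prod_ineq:
  fixes m :: nat and z :: "nat \<Rightarrow> complex"
  assumes z: "\<forall>i<m. cmod (z i) < 1" and x: "cmod x \<ge> 1"
  shows "cmod (\<Prod>i<m. 1 - cnj (z i) * x) \<le> cmod (\<Prod>i<m. x - z i)" "(\<Prod>i<m. x - z i) \<noteq> 0"
proof -
  have "cmod (\<Prod>i<m. 1 - cnj (z i) * x) = (\<Prod>i<m. cmod (1 - cnj (z i) * x))" by (simp add: prod_norm)
  also have "\<dots> \<le> (\<Prod>i<m. cmod (x - z i))"
    by (rule prod_mono) (use z x fac_ineq in auto)
  also have "\<dots> = cmod (\<Prod>i<m. x - z i)" by (simp add: prod_norm)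
  finally show "cmod (\<Prod>i<m. 1 - cnj (z i) * x) \<le> cmod (\<Prod>i<m. x - z i)" .
  have nz: "x - z i \<noteq> 0" if "i < m" for i using z x that by auto
  show "(\<Prod>i<m. x - z i) \<noteq> 0"
  proof
    assume "(\<Prod>i<m. x - z i) = 0"
    then have "\<exists>i\<in>{..<m}. x - z i = 0" using prod_zero_iff[of "{..<m}" "\<lambda>i. x - z i"] by simp
    then show False using nz by auto
  qed
qed

lemma poly_prod_lin:
  fixes m :: nat and z :: "nat \<Rightarrow> complex"
  shows "poly (\<Prod>i<m. [:-z i, 1:]) x = (\<Prod>i<m. x - z i)"
  and "poly (\<Prod>i<m. [:1, - cnj (z i):]) x = (\<Prod>i<m. 1 - cnj (z i) * x)"
  by (simp_all add: poly_prod algebra_simps)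


lemma ball01: "(z \<in> ball (0::complex) 1) \<longleftrightarrow> cmod z < 1"
  by (simp add: dist_0_norm)

lemma SC_forward:
  assumes n2: "n \<ge> 2" and G: "in_G n s p"
  shows "condK n s p \<and> cmod p < 1"
proof -
  obtain m where nm: "n = Suc m" and m1: "m \<ge> 1" using n2 by (cases n) auto
  obtain z where z1: "\<forall>i<n. z i \<in> ball 0 1" and z2: "\<forall>k\<in>{1..n-1}. s k = esym n z k"
    and z3: "p = (\<Prod>i<n. z i)"
    using G unfolding in_G_def by blast
  have zn: "\<forall>i<n. cmod (z i) < 1" using z1 ball01 by blast
  define S where "S = (\<lambda>k. esym n z k)"
  have S0: "S 0 = 1" unfolding S_def by (rule esym_0)
  have Sn: "S (Suc m) = p" unfolding S_def z3 nm by (rule esym_top)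
  have hp: "cmod p < 1"
  proof -
    have "cmod (esym n z n) < real (n choose n)" using esym_bound[OF zn, of n] n2 by simp
    then show ?thesis using Sn nm unfolding S_def by simp
  qed
  define c where "c = 1 - complex_of_real ((cmod p)^2)"
  have c0: "c \<noteq> 0" unfolding c_def using cpos[OF hp] .
  define S' where "S' = (\<lambda>k. (S k - p * cnj (S (Suc m - k))) / c)"
  have A: "Pm (Suc m) S - smult ((-1)^(Suc m) * p) (Rm (Suc m) S) = smult c (pCons 0 (Pm m S'))"
    unfolding S'_def c_def by (rule identA[OF S0 Sn hp])
  have PF: "Pm (Suc m) S = (\<Prod>i<Suc m. [:-z i, 1:])" unfolding nm[symmetric] by (rule Pm_prod) (simp add: S_def)
  have PR: "Rm (Suc m) S = (\<Prod>i<Suc m. [:1, - cnj (z i):])" unfolding nm[symmetric] by (rule Rm_prod) (simp add: S_def)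
  have zs: "\<forall>i<Suc m. cmod (z i) < 1" using zn nm by simp
  have groots: "\<forall>x. poly (Pm m S') x = 0 \<longrightarrow> cmod x < 1"
  proof (intro allI impI)
    fix x assume g0: "poly (Pm m S') x = 0"
    show "cmod x < 1"
    proof (rule ccontr)
      assume "\<not> cmod x < 1"
      then have x1: "cmod x \<ge> 1" by simp
      define F where "F = (\<Prod>i<Suc m. x - z i)"
      define Fs where "Fs = (\<Prod>i<Suc m. 1 - cnj (z i) * x)"
      have pi: "cmod Fs \<le> cmod F" "F \<noteq> 0" unfolding F_def Fs_def using prod_ineq[OF zs x1] by auto
      have e1: "poly (Pm (Suc m) S) x = F" unfolding PF F_def by (rule poly_prod_lin(1))
      have e2: "poly (Rm (Suc m) S) x = Fs" unfolding PR Fs_def by (rule poly_prod_lin(2))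
      have "poly (Pm (Suc m) S) x - (-1)^(Suc m) * p * poly (Rm (Suc m) S) x = c * (0 + x * poly (Pm m S') x)"
        using arg_cong[OF A, of "\<lambda>q. poly q x"] by (simp only: poly_diff poly_smult poly_pCons)
      then have eq: "F - (-1)^(Suc m) * p * Fs = 0" using g0 e1 e2 by simp
      have "cmod ((-1)^(Suc m) * p * Fs) = cmod p * cmod Fs" by (simp add: norm_mult norm_power)
      also have "\<dots> \<le> cmod p * cmod F" using pi by (intro mult_left_mono) auto
      also have "\<dots> < cmod F" using hp pi by simp
      finally have lt: "cmod ((-1)^(Suc m) * p * Fs) < cmod F" .
      have Feq: "F = (-1)^(Suc m) * p * Fs" using eq by (rule right_minus_eq[THEN iffD1])
      from lt have "cmod F < cmod F" by (simp only: Feq[symmetric])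
      then show False by simp
    qed
  qed
  have S'0: "S' 0 = 1" unfolding S'_def using S0 Sn c0 by (simp add: pcnj c_def)
  obtain w where w1: "\<forall>i<m. cmod (w i) < 1" and w2: "\<forall>k\<le>m. S' k = esym m w k"
    using factor_roots[OF S'0 groots] by blast
  have Ss: "S k = s k" if "1 \<le> k" "k \<le> m" for k using z2 that nm unfolding S_def by auto
  have K: "in_G (n-1) (\<lambda>k. (s k - cnj (s (n-k)) * p) / (1 - complex_of_real ((cmod p)\<^sup>2)))
                ((s (n-1) - cnj (s 1) * p) / (1 - complex_of_real ((cmod p)\<^sup>2)))"
    unfolding in_G_def
  proof (intro exI[of _ w] conjI ballI allI impI)
    fix i assume "i < n - 1" then show "w i \<in> ball 0 1" using w1 nm ball01 by auto
  next
    fix k assume k: "k \<in> {1..n-1-1}"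
    then have k1: "1 \<le> k" "k \<le> m" "1 \<le> Suc m - k" "Suc m - k \<le> m" using nm by auto
    have "(s k - cnj (s (n-k)) * p) / (1 - complex_of_real ((cmod p)\<^sup>2)) = S' k"
      unfolding S'_def c_def using Ss[OF k1(1,2)] Ss[OF k1(3,4)] nm by (simp add: mult.commute)
    then show "(s k - cnj (s (n-k)) * p) / (1 - complex_of_real ((cmod p)\<^sup>2)) = esym (n-1) w k"
      using w2 k1 nm by simp
  next
    have "(s (n-1) - cnj (s 1) * p) / (1 - complex_of_real ((cmod p)\<^sup>2)) = S' m"
      unfolding S'_def c_def using Ss[of m] Ss[of 1] m1 nm by (simp add: mult.commute)
    also have "\<dots> = esym m w m" using w2 by simp
    also have "\<dots> = (\<Prod>i<n-1. w i)" using nm by (simp add: esym_top)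
    finally show "(s (n-1) - cnj (s 1) * p) / (1 - complex_of_real ((cmod p)\<^sup>2)) = (\<Prod>i<n-1. w i)" .
  qed
  have "cmod p \<noteq> 1" using hp by simp
  then show ?thesis using K hp unfolding condK_def by simp
qed


lemma condK_w:
  assumes n2: "n \<ge> 2" and K: "condK n s p"
  obtains w where "\<forall>i<n-1. cmod (w i) < 1"
    "\<forall>k\<in>{1..n-1}. (s k - cnj (s (n-k)) * p) / (1 - complex_of_real ((cmod p)\<^sup>2)) = esym (n-1) w k"
proof -
  obtain w where w1: "\<forall>i<n-1. w i \<in> ball 0 1"
    and w2: "\<forall>k\<in>{1..n-1-1}. (s k - cnj (s (n-k)) * p) / (1 - complex_of_real ((cmod p)\<^sup>2)) = esym (n-1) w k"
    and w3: "(s (n-1) - cnj (s 1) * p) / (1 - complex_of_real ((cmod p)\<^sup>2)) = (\<Prod>i<n-1. w i)"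
    using K unfolding condK_def in_G_def by blast
  have "\<forall>k\<in>{1..n-1}. (s k - cnj (s (n-k)) * p) / (1 - complex_of_real ((cmod p)\<^sup>2)) = esym (n-1) w k"
  proof
    fix k assume k: "k \<in> {1..n-1}"
    show "(s k - cnj (s (n-k)) * p) / (1 - complex_of_real ((cmod p)\<^sup>2)) = esym (n-1) w k"
    proof (cases "k = n - 1")
      case True
      have "n - k = 1" using True n2 by simp
      then show ?thesis using w3 True by (simp add: esym_top)
    next
      case False
      then show ?thesis using w2 k by auto
    qed
  qed
  moreover have "\<forall>i<n-1. cmod (w i) < 1" using w1 ball01 by blast
  ultimately show ?thesis using that by blast
qed

lemma SC_backward:
  assumes n2: "n \<ge> 2" and K: "condK n s p" and hp: "cmod p < 1"
  shows "in_G n s p"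
proof -
  obtain m where nm: "n = Suc m" and m1: "m \<ge> 1" using n2 by (cases n) auto
  obtain w where w1: "\<forall>i<n-1. cmod (w i) < 1"
    and w2: "\<forall>k\<in>{1..n-1}. (s k - cnj (s (n-k)) * p) / (1 - complex_of_real ((cmod p)\<^sup>2)) = esym (n-1) w k"
    using condK_w[OF n2 K] by blast
  define S where "S = (\<lambda>k. if k = 0 then 1 else if k = n then p else s k)"
  have S0: "S 0 = 1" unfolding S_def by simp
  have Sn: "S (Suc m) = p" unfolding S_def using nm by simp
  define c where "c = 1 - complex_of_real ((cmod p)^2)"
  have c0: "c \<noteq> 0" unfolding c_def using cpos[OF hp] .
  define S' where "S' = (\<lambda>k. (S k - p * cnj (S (Suc m - k))) / c)"
  have S'0: "S' 0 = 1" unfolding S'_def using S0 Sn c0 by (simp add: pcnj c_def)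
  have S'e: "\<forall>k\<le>m. S' k = esym m w k"
  proof (intro allI impI)
    fix k assume k: "k \<le> m"
    show "S' k = esym m w k"
    proof (cases "k = 0")
      case True then show ?thesis using S'0 by (simp add: esym_0)
    next
      case False
      then have k1: "k \<in> {1..n-1}" using k nm by auto
      have "S' k = (s k - cnj (s (n-k)) * p) / (1 - complex_of_real ((cmod p)\<^sup>2))"
        unfolding S'_def S_def c_def using False k nm by (simp add: mult.commute)
      then show ?thesis using w2 k1 nm by simp
    qed
  qed
  have B: "Pm (Suc m) S = pCons 0 (Pm m S') + smult ((-1)^(Suc m) * p) (Rm m S')"
    unfolding S'_def c_def by (rule identB[OF S0 Sn hp])
  have PG: "Pm m S' = (\<Prod>i<m. [:-w i, 1:])" by (rule Pm_prod[OF S'e])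
  have PR: "Rm m S' = (\<Prod>i<m. [:1, - cnj (w i):])" by (rule Rm_prod[OF S'e])
  have ws: "\<forall>i<m. cmod (w i) < 1" using w1 nm by simp
  have froots: "\<forall>x. poly (Pm (Suc m) S) x = 0 \<longrightarrow> cmod x < 1"
  proof (intro allI impI)
    fix x assume f0: "poly (Pm (Suc m) S) x = 0"
    show "cmod x < 1"
    proof (rule ccontr)
      assume "\<not> cmod x < 1"
      then have x1: "cmod x \<ge> 1" by simp
      define G where "G = (\<Prod>i<m. x - w i)"
      define Gs where "Gs = (\<Prod>i<m. 1 - cnj (w i) * x)"
      have pi: "cmod Gs \<le> cmod G" "G \<noteq> 0" unfolding G_def Gs_def using prod_ineq[OF ws x1] by auto
      have e1: "poly (Pm m S') x = G" unfolding PG G_def by (rule poly_prod_lin(1))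
      have e2: "poly (Rm m S') x = Gs" unfolding PR Gs_def by (rule poly_prod_lin(2))
      have "poly (Pm (Suc m) S) x = (0 + x * poly (Pm m S') x) + (-1)^(Suc m) * p * poly (Rm m S') x"
        using arg_cong[OF B, of "\<lambda>q. poly q x"] by (simp only: poly_add poly_smult poly_pCons)
      then have eq: "x * G + (-1)^(Suc m) * p * Gs = 0" using f0 e1 e2 by simp
      have "cmod ((-1)^(Suc m) * p * Gs) = cmod p * cmod Gs" by (simp add: norm_mult norm_power)
      also have "\<dots> \<le> cmod p * cmod G" using pi by (intro mult_left_mono) auto
      also have "\<dots> < cmod G" using hp pi by simp
      also have "\<dots> \<le> cmod x * cmod G" using x1 by (simp add: mult_le_cancel_right1)
      also have "\<dots> = cmod (x * G)" by (simp add: norm_mult)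
      finally have lt: "cmod ((-1)^(Suc m) * p * Gs) < cmod (x * G)" .
      have "x * G = - ((-1)^(Suc m) * p * Gs)" using eq by (simp add: add_eq_0_iff2)
      then have "cmod (x * G) = cmod ((-1)^(Suc m) * p * Gs)" by simp
      then show False using lt by simp
    qed
  qed
  obtain z where z1: "\<forall>i<Suc m. cmod (z i) < 1" and z2: "\<forall>k\<le>Suc m. S k = esym (Suc m) z k"
    using factor_roots[OF S0 froots] by blast
  show ?thesis unfolding in_G_def
  proof (intro exI[of _ z] conjI ballI allI impI)
    fix i assume "i < n" then show "z i \<in> ball 0 1" using z1 nm ball01 by auto
  next
    fix k assume k: "k \<in> {1..n-1}"
    then have "S k = s k" unfolding S_def by auto
    then show "s k = esym n z k" using z2 k nm by auto
  next
    have "p = S (Suc m)" using Sn by simp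
    also have "\<dots> = esym (Suc m) z (Suc m)" using z2 by simp
    also have "\<dots> = (\<Prod>i<n. z i)" using nm by (simp add: esym_top)
    finally show "p = (\<Prod>i<n. z i)" .
  qed
qed

lemma condK_T:
  assumes n2: "n \<ge> 2" and K: "condK n s p" and hp: "cmod p < 1" and j: "j \<in> {1..n div 2}"
  shows "cmod (s (n-j) - cnj (s j) * p) + cmod (s j - cnj (s (n-j)) * p) < real (n choose j) * (1 - (cmod p)^2)"
proof -
  obtain m where nm: "n = Suc m" and m1: "m \<ge> 1" using n2 by (cases n) auto
  obtain w where w1: "\<forall>i<n-1. cmod (w i) < 1"
    and w2: "\<forall>k\<in>{1..n-1}. (s k - cnj (s (n-k)) * p) / (1 - complex_of_real ((cmod p)\<^sup>2)) = esym (n-1) w k"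
    using condK_w[OF n2 K] by blast
  define c where "c = 1 - (cmod p)^2"
  have c0: "c > 0" unfolding c_def using hp abs_square_less_1[of "cmod p"] by simp
  have ws: "\<forall>i<m. cmod (w i) < 1" using w1 nm by simp
  have bnd: "cmod (s k - cnj (s (n-k)) * p) < c * real (m choose k)" if k: "1 \<le> k" "k \<le> m" for k
  proof -
    have "k \<in> {1..n-1}" using k nm by simp
    then have "(s k - cnj (s (n-k)) * p) / complex_of_real c = esym m w k" using w2 nm unfolding c_def by simp
    then have "s k - cnj (s (n-k)) * p = complex_of_real c * esym m w k" using c0 by (simp add: field_simps)
    then have "cmod (s k - cnj (s (n-k)) * p) = c * cmod (esym m w k)" using c0 by (simp add: norm_mult)
    also have "\<dots> < c * real (m choose k)" using esym_bound[OF ws k] c0 by simp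
    finally show ?thesis .
  qed
  have j1: "1 \<le> j" "j \<le> m" using j nm n2 by auto
  have j2: "1 \<le> n - j" "n - j \<le> m" using j nm by auto
  have nnj: "n - (n - j) = j" using j by auto
  have b1: "cmod (s j - cnj (s (n-j)) * p) < c * real (m choose j)" by (rule bnd[OF j1])
  have b2: "cmod (s (n-j) - cnj (s j) * p) < c * real (m choose (n-j))" using bnd[OF j2] nnj by simp
  have ch: "(m choose (n-j)) + (m choose j) = (n choose j)"
  proof -
    obtain i where i: "j = Suc i" using j1 by (cases j) auto
    have "m choose (n-j) = m choose (m - i)" using i nm by simp
    also have "\<dots> = m choose i" using j1 i by (intro binomial_symmetric[symmetric]) simp
    finally have "m choose (n-j) = m choose i" .
    then show ?thesis using i nm by simp
  qed
  have "cmod (s (n-j) - cnj (s j) * p) + cmod (s j - cnj (s (n-j)) * p) < c * (real (m choose (n-j)) + real (m choose j))"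
    using b1 b2 by (simp add: distrib_left)
  also have "\<dots> = real (n choose j) * (1 - (cmod p)^2)" using ch unfolding c_def
    by (metis mult.commute of_nat_add)
  finally show ?thesis .
qed


lemma sc_setup:
  fixes k :: nat and x :: complex
  assumes "k > 0"
  shows "x = of_nat k * (x / of_nat k)"
  using assms by simp

lemma cmod_ofnat: "cmod (of_nat k * x) = real k * cmod x"
  by (simp add: norm_mult)

lemma cnj_ofnat: "cnj (of_nat k * x) = of_nat k * cnj x"
  by simp

lemma sc2:
  fixes k :: nat assumes k0: "k > 0"
  shows "(\<forall>z w. cmod z \<le> 1 \<longrightarrow> cmod w \<le> 1 \<longrightarrow> of_nat k - sj * z - snj * w + of_nat k * p * z * w \<noteq> 0)
     \<longleftrightarrow> E2 (sj / of_nat k) (snj / of_nat k) p"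
proof -
  define a where "a = sj / of_nat k"
  define b where "b = snj / of_nat k"
  have sa: "sj = of_nat k * a" and sb: "snj = of_nat k * b" unfolding a_def b_def using k0 by simp_all
  have e: "of_nat k - sj * z - snj * w + of_nat k * p * z * w = of_nat k * (1 - a*z - b*w + p*z*w)" for z w
    unfolding sa sb by (simp add: algebra_simps)
  have kz: "(of_nat k :: complex) \<noteq> 0" using k0 by simp
  show ?thesis unfolding E2_def e a_def[symmetric] b_def[symmetric] using kz by simp
qed

lemma sc4:
  fixes k :: nat assumes k0: "k > 0"
  shows "real k * cmod (sj - cnj snj * p) + cmod (sj * snj - (of_nat k)^2 * p) < (real k)^2 - (cmod snj)^2
     \<longleftrightarrow> C4 (sj / of_nat k) (snj / of_nat k) p"
proof -
  define a where "a = sj / of_nat k"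
  define b where "b = snj / of_nat k"
  have sa: "sj = of_nat k * a" and sb: "snj = of_nat k * b" unfolding a_def b_def using k0 by simp_all
  have e1: "sj - cnj snj * p = of_nat k * (a - cnj b * p)" unfolding sa sb by (simp add: algebra_simps)
  have e2: "sj * snj - (of_nat k)^2 * p = of_nat (k^2) * (a*b - p)" unfolding sa sb by (simp add: algebra_simps power2_eq_square)
  have l: "real k * cmod (sj - cnj snj * p) + cmod (sj * snj - (of_nat k)^2 * p)
      = (real k)^2 * (cmod (a - cnj b * p) + cmod (a*b - p))"
    unfolding e1 e2 cmod_ofnat by (simp add: algebra_simps power2_eq_square)
  have r: "(real k)^2 - (cmod snj)^2 = (real k)^2 * (1 - (cmod b)^2)"
    unfolding sb cmod_ofnat by (simp add: algebra_simps power2_eq_square)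
  have kp: "(real k)^2 > 0" using k0 by simp
  show ?thesis unfolding l r C4_def a_def[symmetric] b_def[symmetric] using kp by simp
qed

lemma sc4':
  fixes k :: nat assumes k0: "k > 0"
  shows "real k * cmod (snj - cnj sj * p) + cmod (sj * snj - (of_nat k)^2 * p) < (real k)^2 - (cmod sj)^2
     \<longleftrightarrow> C4 (snj / of_nat k) (sj / of_nat k) p"
  using sc4[OF k0, of snj sj p] by (simp add: mult.commute)

lemma sc5:
  fixes k :: nat assumes k0: "k > 0"
  shows "((cmod sj)^2 - (cmod snj)^2 + (real k)^2 * (cmod p)^2 + 2 * real k * cmod (snj - cnj sj * p) < (real k)^2
       \<and> cmod snj < real k)
     \<longleftrightarrow> C5 (sj / of_nat k) (snj / of_nat k) p"
proof -
  define a where "a = sj / of_nat k"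
  define b where "b = snj / of_nat k"
  have sa: "sj = of_nat k * a" and sb: "snj = of_nat k * b" unfolding a_def b_def using k0 by simp_all
  have e1: "snj - cnj sj * p = of_nat k * (b - cnj a * p)" unfolding sa sb by (simp add: algebra_simps)
  have l: "(cmod sj)^2 - (cmod snj)^2 + (real k)^2 * (cmod p)^2 + 2 * real k * cmod (snj - cnj sj * p)
      = (real k)^2 * ((cmod a)^2 - (cmod b)^2 + (cmod p)^2 + 2 * cmod (b - cnj a * p))"
  proof -
    have "cmod (snj - cnj sj * p) = real k * cmod (b - cnj a * p)" unfolding e1 cmod_ofnat ..
    moreover have "cmod sj = real k * cmod a" "cmod snj = real k * cmod b" unfolding sa sb cmod_ofnat by simp_all
    ultimately show ?thesis by (simp add: algebra_simps power2_eq_square)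
  qed
  have r: "(real k)^2 = (real k)^2 * 1" by simp
  have kp: "(real k)^2 > 0" using k0 by simp
  have "cmod snj < real k \<longleftrightarrow> cmod b < 1" unfolding sb cmod_ofnat using k0 by simp
  moreover have "(real k)^2 * ((cmod a)^2 - (cmod b)^2 + (cmod p)^2 + 2 * cmod (b - cnj a * p)) < (real k)^2 * 1
      \<longleftrightarrow> (cmod a)^2 - (cmod b)^2 + (cmod p)^2 + 2 * cmod (b - cnj a * p) < 1"
    using kp by (rule mult_less_cancel_left_pos)
  ultimately show ?thesis unfolding C5_def a_def[symmetric] b_def[symmetric] l by simp
qed

lemma sc5':
  fixes k :: nat assumes k0: "k > 0"
  shows "((cmod snj)^2 - (cmod sj)^2 + (real k)^2 * (cmod p)^2 + 2 * real k * cmod (sj - cnj snj * p) < (real k)^2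
       \<and> cmod sj < real k)
     \<longleftrightarrow> C5 (snj / of_nat k) (sj / of_nat k) p"
  by (rule sc5[OF k0])

lemma sc6:
  fixes k :: nat assumes k0: "k > 0"
  shows "(cmod sj)^2 + (cmod snj)^2 - (real k)^2 * (cmod p)^2 + 2 * cmod (sj * snj - (of_nat k)^2 * p) < (real k)^2
     \<longleftrightarrow> (cmod (sj / of_nat k))^2 + (cmod (snj / of_nat k))^2 - (cmod p)^2 + 2 * cmod ((sj / of_nat k) * (snj / of_nat k) - p) < 1"
proof -
  define a where "a = sj / of_nat k"
  define b where "b = snj / of_nat k"
  have sa: "sj = of_nat k * a" and sb: "snj = of_nat k * b" unfolding a_def b_def using k0 by simp_all
  have e2: "sj * snj - (of_nat k)^2 * p = of_nat (k^2) * (a*b - p)" unfolding sa sb by (simp add: algebra_simps power2_eq_square)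
  have l: "(cmod sj)^2 + (cmod snj)^2 - (real k)^2 * (cmod p)^2 + 2 * cmod (sj * snj - (of_nat k)^2 * p)
      = (real k)^2 * ((cmod a)^2 + (cmod b)^2 - (cmod p)^2 + 2 * cmod (a*b - p))"
    unfolding e2 cmod_ofnat unfolding sa sb cmod_ofnat by (simp add: algebra_simps power2_eq_square)
  have kp: "(real k)^2 > 0" using k0 by simp
  have "(real k)^2 * ((cmod a)^2 + (cmod b)^2 - (cmod p)^2 + 2 * cmod (a*b - p)) < (real k)^2 * 1
      \<longleftrightarrow> (cmod a)^2 + (cmod b)^2 - (cmod p)^2 + 2 * cmod (a*b - p) < 1"
    using kp by (rule mult_less_cancel_left_pos)
  then show ?thesis unfolding a_def[symmetric] b_def[symmetric] l by simp
qed

lemma sc7: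
  fixes k :: nat assumes k0: "k > 0"
  shows "cmod (snj - cnj sj * p) + cmod (sj - cnj snj * p) < real k * (1 - (cmod p)^2)
     \<longleftrightarrow> Tt (sj / of_nat k) (snj / of_nat k) p"
proof -
  define a where "a = sj / of_nat k"
  define b where "b = snj / of_nat k"
  have sa: "sj = of_nat k * a" and sb: "snj = of_nat k * b" unfolding a_def b_def using k0 by simp_all
  have e1: "snj - cnj sj * p = of_nat k * (b - cnj a * p)" unfolding sa sb by (simp add: algebra_simps)
  have e2: "sj - cnj snj * p = of_nat k * (a - cnj b * p)" unfolding sa sb by (simp add: algebra_simps)
  have l: "cmod (snj - cnj sj * p) + cmod (sj - cnj snj * p) = real k * (cmod (b - cnj a * p) + cmod (a - cnj b * p))"
    unfolding e1 e2 cmod_ofnat by (simp add: algebra_simps)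
  have kp: "real k > 0" using k0 by simp
  show ?thesis unfolding Tt_def l a_def[symmetric] b_def[symmetric] using kp by simp
qed

lemma sc8:
  fixes k :: nat and M :: "complex^2^2" assumes k0: "k > 0"
  shows "(mat_opnorm M < 1 \<and> sj = of_nat k * M$1$1 \<and> snj = of_nat k * M$2$2 \<and> det M = p)
     \<longleftrightarrow> (mat_opnorm M < 1 \<and> M$1$1 = sj / of_nat k \<and> M$2$2 = snj / of_nat k \<and> det M = p)"
  using k0 by (auto simp: field_simps)

lemma sc9:
  fixes k :: nat and M :: "complex^2^2" assumes k0: "k > 0"
  shows "(mat_opnorm M < 1 \<and> transpose M = M \<and> sj = of_nat k * M$1$1 \<and> snj = of_nat k * M$2$2 \<and> det M = p)
     \<longleftrightarrow> (mat_opnorm M < 1 \<and> transpose M = M \<and> M$1$1 = sj / of_nat k \<and> M$2$2 = snj / of_nat k \<and> det M = p)"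
  using k0 by (auto simp: field_simps)

lemma sc_deg:
  fixes k :: nat assumes k0: "k > 0"
  shows "sj * snj = (of_nat k)^2 * p \<longleftrightarrow> (sj / of_nat k) * (snj / of_nat k) = p"
    and "cmod snj < real k \<longleftrightarrow> cmod (snj / of_nat k) < 1"
  using k0 by (auto simp: field_simps power2_eq_square norm_divide)


lemma Phi_scale_gen:
  assumes k0: "k > 0" and kk: "n choose jj = k" and nn: "n - jj = jj'"
  shows "Phi_Hinf n jj s p = PsiH (s jj / of_nat k) (s jj' / of_nat k) p"
proof -
  define a where "a = s jj / of_nat k"
  define b where "b = s jj' / of_nat k"
  have kz: "(of_nat k :: complex) \<noteq> 0" using k0 by simp
  have sa: "s jj = of_nat k * a" and sb: "s jj' = of_nat k * b" unfolding a_def b_def using kz by simp_all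
  have dg: "of_nat k * a * (of_nat k * b) = (of_nat k)^2 * p \<longleftrightarrow> a * b = p"
    using kz by (simp add: power2_eq_square algebra_simps)
  have bz: "of_nat k * b * z = of_nat k \<longleftrightarrow> b * z = 1" for z
  proof -
    have "of_nat k * b * z = of_nat k * (b * z)" by (simp add: mult.assoc)
    then show ?thesis using kz by simp
  qed
  have d1: "Phi_defined n jj z s p \<longleftrightarrow> ((b*z \<noteq> 1 \<and> a*b \<noteq> p) \<or> a*b = p)" for z
    unfolding Phi_defined_def kk nn sa sb dg bz ..
  have v: "Phi n jj z s p = Psi a b p z" for z
  proof (cases "a * b = p")
    case True
    then show ?thesis unfolding Phi_def Psi_def kk nn sa sb dg using kz by simp
  next
    case False
    have "(of_nat k * p * z - of_nat k * a) / (of_nat k * b * z - of_nat k) = (p * z - a) / (b * z - 1)"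
    proof -
      have "(of_nat k * p * z - of_nat k * a) = of_nat k * (p * z - a)" by (simp add: algebra_simps)
      moreover have "(of_nat k * b * z - of_nat k) = of_nat k * (b * z - 1)" by (simp add: algebra_simps)
      ultimately show ?thesis using kz by simp
    qed
    then show ?thesis unfolding Phi_def Psi_def kk nn sa sb dg using False by simp
  qed
  show ?thesis unfolding Phi_Hinf_def PsiH_def d1 v a_def[symmetric] b_def[symmetric] ..
qed


lemma jJ_facts:
  assumes "j \<in> {1..n div 2}"
  shows "1 \<le> j" "j \<le> n" "n choose j > 0" "n - (n - j) = j" "n choose (n - j) = n choose j"
  using assms by (auto simp: binomial_symmetric[symmetric])

lemma choice_J:
  assumes "\<forall>j\<in>J. \<exists>M. P j M"
  shows "\<exists>B. \<forall>j\<in>J. P j (B j)"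
  using assms by (rule bchoice)

theorem mainTheorem8:
  fixes n :: nat and s :: "nat \<Rightarrow> complex" and p :: complex
  assumes "n \<ge> 2"
  defines "J \<equiv> {1..n div 2}"
  shows
   "(in_G n s p \<longleftrightarrow>
       condK n s p \<and> (\<forall>j\<in>J. \<forall>z w. cmod z \<le> 1 \<longrightarrow> cmod w \<le> 1 \<longrightarrow>
          of_nat (n choose j) - s j * z - s (n-j) * w + of_nat (n choose j) * p * z * w \<noteq> 0))
  \<and> (in_G n s p \<longleftrightarrow>
       condK n s p \<and> (\<forall>j\<in>J. Phi_Hinf n j s p < 1 \<and>
          (s j * s (n-j) = (of_nat (n choose j))\<^sup>2 * p \<longrightarrow> cmod (s (n-j)) < real (n choose j))))
  \<and> (in_G n s p \<longleftrightarrow>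
       condK n s p \<and> (\<forall>j\<in>J. Phi_Hinf n (n-j) s p < 1 \<and>
          (s j * s (n-j) = (of_nat (n choose j))\<^sup>2 * p \<longrightarrow> cmod (s j) < real (n choose j))))
  \<and> (in_G n s p \<longleftrightarrow>
       condK n s p \<and> (\<forall>j\<in>J.
          real (n choose j) * cmod (s j - cnj (s (n-j)) * p)
          + cmod (s j * s (n-j) - (of_nat (n choose j))\<^sup>2 * p)
          < (real (n choose j))\<^sup>2 - (cmod (s (n-j)))\<^sup>2))
  \<and> (in_G n s p \<longleftrightarrow>
       condK n s p \<and> (\<forall>j\<in>J.
          real (n choose j) * cmod (s (n-j) - cnj (s j) * p)
          + cmod (s j * s (n-j) - (of_nat (n choose j))\<^sup>2 * p)
          < (real (n choose j))\<^sup>2 - (cmod (s j))\<^sup>2))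
  \<and> (in_G n s p \<longleftrightarrow>
       condK n s p \<and> (\<forall>j\<in>J.
          (cmod (s j))\<^sup>2 - (cmod (s (n-j)))\<^sup>2 + (real (n choose j))\<^sup>2 * (cmod p)\<^sup>2
          + 2 * real (n choose j) * cmod (s (n-j) - cnj (s j) * p) < (real (n choose j))\<^sup>2
          \<and> cmod (s (n-j)) < real (n choose j)))
  \<and> (in_G n s p \<longleftrightarrow>
       condK n s p \<and> (\<forall>j\<in>J.
          (cmod (s (n-j)))\<^sup>2 - (cmod (s j))\<^sup>2 + (real (n choose j))\<^sup>2 * (cmod p)\<^sup>2
          + 2 * real (n choose j) * cmod (s j - cnj (s (n-j)) * p) < (real (n choose j))\<^sup>2
          \<and> cmod (s j) < real (n choose j)))
  \<and> (in_G n s p \<longleftrightarrow>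
       condK n s p \<and> cmod p < 1 \<and> (\<forall>j\<in>J.
          (cmod (s j))\<^sup>2 + (cmod (s (n-j)))\<^sup>2 - (real (n choose j))\<^sup>2 * (cmod p)\<^sup>2
          + 2 * cmod (s j * s (n-j) - (of_nat (n choose j))\<^sup>2 * p) < (real (n choose j))\<^sup>2))
  \<and> (in_G n s p \<longleftrightarrow>
       condK n s p \<and> (\<forall>j\<in>J.
          cmod (s (n-j) - cnj (s j) * p) + cmod (s j - cnj (s (n-j)) * p)
          < real (n choose j) * (1 - (cmod p)\<^sup>2)))
  \<and> (in_G n s p \<longleftrightarrow>
       condK n s p \<and> (\<exists>B :: nat \<Rightarrow> complex^2^2. \<forall>j\<in>J.
          mat_opnorm (B j) < 1 \<and> s j = of_nat (n choose j) * (B j $ 1 $ 1)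
          \<and> s (n-j) = of_nat (n choose j) * (B j $ 2 $ 2) \<and> det (B j) = p))
  \<and> (in_G n s p \<longleftrightarrow>
       condK n s p \<and> (\<exists>B :: nat \<Rightarrow> complex^2^2. \<forall>j\<in>J.
          mat_opnorm (B j) < 1 \<and> transpose (B j) = B j \<and> s j = of_nat (n choose j) * (B j $ 1 $ 1)
          \<and> s (n-j) = of_nat (n choose j) * (B j $ 2 $ 2) \<and> det (B j) = p))"
proof -
  have n2: "n \<ge> 2" by fact
  define a where "a = (\<lambda>j. s j / of_nat (n choose j))"
  define b where "b = (\<lambda>j. s (n-j) / of_nat (n choose j))"
  have J1: "1 \<in> J" unfolding J_def using n2 by auto
  note jf = jJ_facts[where n=n, folded J_def]
  have key: "in_G n s p \<longleftrightarrow> condK n s p \<and> (\<forall>j\<in>J. Tt (a j) (b j) p)"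
  proof
    assume G: "in_G n s p"
    have K: "condK n s p" and hp: "cmod p < 1" using SC_forward[OF n2 G] by auto
    have "Tt (a j) (b j) p" if j: "j \<in> J" for j
      using condK_T[OF n2 K hp j[unfolded J_def]] sc7[OF jf(3)[OF j]] unfolding a_def b_def by simp
    then show "condK n s p \<and> (\<forall>j\<in>J. Tt (a j) (b j) p)" using K by blast
  next
    assume h: "condK n s p \<and> (\<forall>j\<in>J. Tt (a j) (b j) p)"
    then have "Tt (a 1) (b 1) p" using J1 by blast
    then have hp: "cmod p < 1" by (rule T_facts_c(1))
    show "in_G n s p" using SC_backward[OF n2 _ hp] h by blast
  qed
  have c2: "(\<forall>j\<in>J. \<forall>z w. cmod z \<le> 1 \<longrightarrow> cmod w \<le> 1 \<longrightarrow>
          of_nat (n choose j) - s j * z - s (n-j) * w + of_nat (n choose j) * p * z * w \<noteq> 0)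
      \<longleftrightarrow> (\<forall>j\<in>J. Tt (a j) (b j) p)"
    using sc2[OF jf(3)] Tt_E2 unfolding a_def b_def by auto
  have c3: "(\<forall>j\<in>J. Phi_Hinf n j s p < 1 \<and>
          (s j * s (n-j) = (of_nat (n choose j))\<^sup>2 * p \<longrightarrow> cmod (s (n-j)) < real (n choose j)))
      \<longleftrightarrow> (\<forall>j\<in>J. Tt (a j) (b j) p)"
  proof -
    have "(Phi_Hinf n j s p < 1 \<and>
          (s j * s (n-j) = (of_nat (n choose j))\<^sup>2 * p \<longrightarrow> cmod (s (n-j)) < real (n choose j)))
       \<longleftrightarrow> Tt (a j) (b j) p" if j: "j \<in> J" for j
    proof -
      have k0: "n choose j > 0" by (rule jf(3)[OF j])
      have ph: "Phi_Hinf n j s p = PsiH (a j) (b j) p"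
        unfolding a_def b_def by (rule Phi_scale_gen[OF k0 refl refl])
      have "(Phi_Hinf n j s p < 1 \<and>
          (s j * s (n-j) = (of_nat (n choose j))\<^sup>2 * p \<longrightarrow> cmod (s (n-j)) < real (n choose j)))
          \<longleftrightarrow> C3 (a j) (b j) p"
        unfolding C3_def ph using sc_deg(1)[OF k0, of "s j" "s (n-j)" p] sc_deg(2)[OF k0, of "s (n-j)"] unfolding a_def b_def by simp
      also have "\<dots> \<longleftrightarrow> Tt (a j) (b j) p" using C3_SS E2_SS Tt_E2 by blast
      finally show ?thesis .
    qed
    then show ?thesis by blast
  qed
  have c3': "(\<forall>j\<in>J. Phi_Hinf n (n-j) s p < 1 \<and>
          (s j * s (n-j) = (of_nat (n choose j))\<^sup>2 * p \<longrightarrow> cmod (s j) < real (n choose j)))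
      \<longleftrightarrow> (\<forall>j\<in>J. Tt (a j) (b j) p)"
  proof -
    have "(Phi_Hinf n (n-j) s p < 1 \<and>
          (s j * s (n-j) = (of_nat (n choose j))\<^sup>2 * p \<longrightarrow> cmod (s j) < real (n choose j)))
       \<longleftrightarrow> Tt (a j) (b j) p" if j: "j \<in> J" for j
    proof -
      have k0: "n choose j > 0" by (rule jf(3)[OF j])
      have ph: "Phi_Hinf n (n-j) s p = PsiH (b j) (a j) p"
        unfolding a_def b_def by (rule Phi_scale_gen[OF k0 jf(5)[OF j] jf(4)[OF j]])
      have dg: "s j * s (n-j) = (of_nat (n choose j))\<^sup>2 * p \<longleftrightarrow> b j * a j = p"
        using sc_deg(1)[OF k0, of "s j" "s (n-j)" p] unfolding a_def b_def by (simp add: mult.commute)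
      have "(Phi_Hinf n (n-j) s p < 1 \<and>
          (s j * s (n-j) = (of_nat (n choose j))\<^sup>2 * p \<longrightarrow> cmod (s j) < real (n choose j)))
          \<longleftrightarrow> C3 (b j) (a j) p"
        unfolding C3_def ph dg using sc_deg(2)[OF k0, of "s j"] unfolding a_def b_def by simp
      also have "\<dots> \<longleftrightarrow> Tt (a j) (b j) p" using C3_SS E2_SS Tt_E2 E2_sym by blast
      finally show ?thesis .
    qed
    then show ?thesis by blast
  qed
  have c4: "(\<forall>j\<in>J.
          real (n choose j) * cmod (s j - cnj (s (n-j)) * p)
          + cmod (s j * s (n-j) - (of_nat (n choose j))\<^sup>2 * p)
          < (real (n choose j))\<^sup>2 - (cmod (s (n-j)))\<^sup>2)
      \<longleftrightarrow> (\<forall>j\<in>J. Tt (a j) (b j) p)"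
    using sc4[OF jf(3)] E2_C4 Tt_E2 unfolding a_def b_def by auto
  have c4': "(\<forall>j\<in>J.
          real (n choose j) * cmod (s (n-j) - cnj (s j) * p)
          + cmod (s j * s (n-j) - (of_nat (n choose j))\<^sup>2 * p)
          < (real (n choose j))\<^sup>2 - (cmod (s j))\<^sup>2)
      \<longleftrightarrow> (\<forall>j\<in>J. Tt (a j) (b j) p)"
    using sc4'[OF jf(3)] E2_C4' Tt_E2 unfolding a_def b_def by auto
  have c5: "(\<forall>j\<in>J.
          (cmod (s j))\<^sup>2 - (cmod (s (n-j)))\<^sup>2 + (real (n choose j))\<^sup>2 * (cmod p)\<^sup>2
          + 2 * real (n choose j) * cmod (s (n-j) - cnj (s j) * p) < (real (n choose j))\<^sup>2
          \<and> cmod (s (n-j)) < real (n choose j))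
      \<longleftrightarrow> (\<forall>j\<in>J. Tt (a j) (b j) p)"
    using sc5[OF jf(3)] Tt_C5 unfolding a_def b_def by auto
  have c5': "(\<forall>j\<in>J.
          (cmod (s (n-j)))\<^sup>2 - (cmod (s j))\<^sup>2 + (real (n choose j))\<^sup>2 * (cmod p)\<^sup>2
          + 2 * real (n choose j) * cmod (s j - cnj (s (n-j)) * p) < (real (n choose j))\<^sup>2
          \<and> cmod (s j) < real (n choose j))
      \<longleftrightarrow> (\<forall>j\<in>J. Tt (a j) (b j) p)"
    using sc5'[OF jf(3)] Tt_C5 Tt_sym unfolding a_def b_def by auto
  have c6: "(cmod p < 1 \<and> (\<forall>j\<in>J.
          (cmod (s j))\<^sup>2 + (cmod (s (n-j)))\<^sup>2 - (real (n choose j))\<^sup>2 * (cmod p)\<^sup>2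
          + 2 * cmod (s j * s (n-j) - (of_nat (n choose j))\<^sup>2 * p) < (real (n choose j))\<^sup>2))
      \<longleftrightarrow> (\<forall>j\<in>J. Tt (a j) (b j) p)"
  proof -
    have e: "((cmod (s j))\<^sup>2 + (cmod (s (n-j)))\<^sup>2 - (real (n choose j))\<^sup>2 * (cmod p)\<^sup>2
          + 2 * cmod (s j * s (n-j) - (of_nat (n choose j))\<^sup>2 * p) < (real (n choose j))\<^sup>2)
        \<longleftrightarrow> (cmod (a j))^2 + (cmod (b j))^2 - (cmod p)^2 + 2 * cmod (a j * b j - p) < 1" if j: "j \<in> J" for j
      using sc6[OF jf(3)[OF j]] unfolding a_def b_def by simp
    show ?thesis
    proof
      assume h: "cmod p < 1 \<and> (\<forall>j\<in>J.
          (cmod (s j))\<^sup>2 + (cmod (s (n-j)))\<^sup>2 - (real (n choose j))\<^sup>2 * (cmod p)\<^sup>2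
          + 2 * cmod (s j * s (n-j) - (of_nat (n choose j))\<^sup>2 * p) < (real (n choose j))\<^sup>2)"
      show "\<forall>j\<in>J. Tt (a j) (b j) p"
      proof
        fix j assume j: "j \<in> J"
        then have "C6 (a j) (b j) p" using h e[OF j] unfolding C6_def by blast
        then show "Tt (a j) (b j) p" using Tt_C6 by blast
      qed
    next
      assume h: "\<forall>j\<in>J. Tt (a j) (b j) p"
      have hp: "cmod p < 1" using h J1 T_facts_c(1) by blast
      have "\<forall>j\<in>J.
          (cmod (s j))\<^sup>2 + (cmod (s (n-j)))\<^sup>2 - (real (n choose j))\<^sup>2 * (cmod p)\<^sup>2
          + 2 * cmod (s j * s (n-j) - (of_nat (n choose j))\<^sup>2 * p) < (real (n choose j))\<^sup>2"
      proof
        fix j assume j: "j \<in> J"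
        then have "C6 (a j) (b j) p" using h Tt_C6 by blast
        then show "(cmod (s j))\<^sup>2 + (cmod (s (n-j)))\<^sup>2 - (real (n choose j))\<^sup>2 * (cmod p)\<^sup>2
          + 2 * cmod (s j * s (n-j) - (of_nat (n choose j))\<^sup>2 * p) < (real (n choose j))\<^sup>2"
          using e[OF j] unfolding C6_def by blast
      qed
      then show "cmod p < 1 \<and> (\<forall>j\<in>J.
          (cmod (s j))\<^sup>2 + (cmod (s (n-j)))\<^sup>2 - (real (n choose j))\<^sup>2 * (cmod p)\<^sup>2
          + 2 * cmod (s j * s (n-j) - (of_nat (n choose j))\<^sup>2 * p) < (real (n choose j))\<^sup>2)"
        using hp by blast
    qed
  qed
  have c7: "(\<forall>j\<in>J.
          cmod (s (n-j) - cnj (s j) * p) + cmod (s j - cnj (s (n-j)) * p)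
          < real (n choose j) * (1 - (cmod p)\<^sup>2))
      \<longleftrightarrow> (\<forall>j\<in>J. Tt (a j) (b j) p)"
    using sc7[OF jf(3)] unfolding a_def b_def by auto
  have c8: "(\<exists>B :: nat \<Rightarrow> complex^2^2. \<forall>j\<in>J.
          mat_opnorm (B j) < 1 \<and> s j = of_nat (n choose j) * (B j $ 1 $ 1)
          \<and> s (n-j) = of_nat (n choose j) * (B j $ 2 $ 2) \<and> det (B j) = p)
      \<longleftrightarrow> (\<forall>j\<in>J. Tt (a j) (b j) p)"
  proof
    assume "\<exists>B :: nat \<Rightarrow> complex^2^2. \<forall>j\<in>J.
          mat_opnorm (B j) < 1 \<and> s j = of_nat (n choose j) * (B j $ 1 $ 1)
          \<and> s (n-j) = of_nat (n choose j) * (B j $ 2 $ 2) \<and> det (B j) = p"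
    then obtain B :: "nat \<Rightarrow> complex^2^2" where B: "\<forall>j\<in>J.
          mat_opnorm (B j) < 1 \<and> s j = of_nat (n choose j) * (B j $ 1 $ 1)
          \<and> s (n-j) = of_nat (n choose j) * (B j $ 2 $ 2) \<and> det (B j) = p" by blast
    show "\<forall>j\<in>J. Tt (a j) (b j) p"
    proof
      fix j assume j: "j \<in> J"
      have "mat_opnorm (B j) < 1 \<and> B j $ 1 $ 1 = a j \<and> B j $ 2 $ 2 = b j \<and> det (B j) = p"
        using B j sc8[OF jf(3)[OF j], of "B j" "s j" "s (n-j)" p] unfolding a_def b_def by auto
      then have "C8 (a j) (b j) p" unfolding C8_def by blast
      then show "Tt (a j) (b j) p" using C8_E2 Tt_E2 by blast
    qed
  next
    assume h: "\<forall>j\<in>J. Tt (a j) (b j) p"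
    have "\<forall>j\<in>J. \<exists>M :: complex^2^2. mat_opnorm M < 1 \<and> s j = of_nat (n choose j) * (M $ 1 $ 1)
          \<and> s (n-j) = of_nat (n choose j) * (M $ 2 $ 2) \<and> det M = p"
    proof
      fix j assume j: "j \<in> J"
      have "C8 (a j) (b j) p" using h j Tt_C6 C6_C9 C9_C8 by blast
      then obtain M :: "complex^2^2" where M: "mat_opnorm M < 1" "M $ 1 $ 1 = a j" "M $ 2 $ 2 = b j" "det M = p"
        unfolding C8_def by blast
      have "mat_opnorm M < 1 \<and> s j = of_nat (n choose j) * (M $ 1 $ 1)
          \<and> s (n-j) = of_nat (n choose j) * (M $ 2 $ 2) \<and> det M = p"
        using M sc8[OF jf(3)[OF j], of M "s j" "s (n-j)" p] unfolding a_def b_def by auto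
      then show "\<exists>M :: complex^2^2. mat_opnorm M < 1 \<and> s j = of_nat (n choose j) * (M $ 1 $ 1)
          \<and> s (n-j) = of_nat (n choose j) * (M $ 2 $ 2) \<and> det M = p" by blast
    qed
    then show "\<exists>B :: nat \<Rightarrow> complex^2^2. \<forall>j\<in>J.
          mat_opnorm (B j) < 1 \<and> s j = of_nat (n choose j) * (B j $ 1 $ 1)
          \<and> s (n-j) = of_nat (n choose j) * (B j $ 2 $ 2) \<and> det (B j) = p" by (rule bchoice)
  qed
  have c9: "(\<exists>B :: nat \<Rightarrow> complex^2^2. \<forall>j\<in>J.
          mat_opnorm (B j) < 1 \<and> transpose (B j) = B j \<and> s j = of_nat (n choose j) * (B j $ 1 $ 1)
          \<and> s (n-j) = of_nat (n choose j) * (B j $ 2 $ 2) \<and> det (B j) = p)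
      \<longleftrightarrow> (\<forall>j\<in>J. Tt (a j) (b j) p)"
  proof
    assume "\<exists>B :: nat \<Rightarrow> complex^2^2. \<forall>j\<in>J.
          mat_opnorm (B j) < 1 \<and> transpose (B j) = B j \<and> s j = of_nat (n choose j) * (B j $ 1 $ 1)
          \<and> s (n-j) = of_nat (n choose j) * (B j $ 2 $ 2) \<and> det (B j) = p"
    then obtain B :: "nat \<Rightarrow> complex^2^2" where B: "\<forall>j\<in>J.
          mat_opnorm (B j) < 1 \<and> transpose (B j) = B j \<and> s j = of_nat (n choose j) * (B j $ 1 $ 1)
          \<and> s (n-j) = of_nat (n choose j) * (B j $ 2 $ 2) \<and> det (B j) = p" by blast
    show "\<forall>j\<in>J. Tt (a j) (b j) p"
    proof
      fix j assume j: "j \<in> J"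
      have "mat_opnorm (B j) < 1 \<and> transpose (B j) = B j \<and> B j $ 1 $ 1 = a j \<and> B j $ 2 $ 2 = b j \<and> det (B j) = p"
        using B j sc9[OF jf(3)[OF j], of "B j" "s j" "s (n-j)" p] unfolding a_def b_def by auto
      then have "C9 (a j) (b j) p" unfolding C9_def by blast
      then show "Tt (a j) (b j) p" using C9_C8 C8_E2 Tt_E2 by blast
    qed
  next
    assume h: "\<forall>j\<in>J. Tt (a j) (b j) p"
    have "\<forall>j\<in>J. \<exists>M :: complex^2^2. mat_opnorm M < 1 \<and> transpose M = M \<and> s j = of_nat (n choose j) * (M $ 1 $ 1)
          \<and> s (n-j) = of_nat (n choose j) * (M $ 2 $ 2) \<and> det M = p"
    proof
      fix j assume j: "j \<in> J"
      have "C9 (a j) (b j) p" using h j Tt_C6 C6_C9 by blast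
      then obtain M :: "complex^2^2" where M: "mat_opnorm M < 1" "transpose M = M" "M $ 1 $ 1 = a j" "M $ 2 $ 2 = b j" "det M = p"
        unfolding C9_def by blast
      have "mat_opnorm M < 1 \<and> transpose M = M \<and> s j = of_nat (n choose j) * (M $ 1 $ 1)
          \<and> s (n-j) = of_nat (n choose j) * (M $ 2 $ 2) \<and> det M = p"
        using M sc9[OF jf(3)[OF j], of M "s j" "s (n-j)" p] unfolding a_def b_def by auto
      then show "\<exists>M :: complex^2^2. mat_opnorm M < 1 \<and> transpose M = M \<and> s j = of_nat (n choose j) * (M $ 1 $ 1)
          \<and> s (n-j) = of_nat (n choose j) * (M $ 2 $ 2) \<and> det M = p" by blast
    qed
    then show "\<exists>B :: nat \<Rightarrow> complex^2^2. \<forall>j\<in>J.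
          mat_opnorm (B j) < 1 \<and> transpose (B j) = B j \<and> s j = of_nat (n choose j) * (B j $ 1 $ 1)
          \<and> s (n-j) = of_nat (n choose j) * (B j $ 2 $ 2) \<and> det (B j) = p" by (rule bchoice)
  qed
  have c6': "(condK n s p \<and> cmod p < 1 \<and> (\<forall>j\<in>J.
          (cmod (s j))\<^sup>2 + (cmod (s (n-j)))\<^sup>2 - (real (n choose j))\<^sup>2 * (cmod p)\<^sup>2
          + 2 * cmod (s j * s (n-j) - (of_nat (n choose j))\<^sup>2 * p) < (real (n choose j))\<^sup>2))
     \<longleftrightarrow> condK n s p \<and> (\<forall>j\<in>J. Tt (a j) (b j) p)"
    using c6 by blast
  show ?thesis
    unfolding c2 c3 c3' c4 c4' c5 c5' c6' c7 c8 c9 using key by blast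
qed


end
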